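(* Let $L>0$, $g_1\in\mathbb{R}$, and let $V:\mathbb{R}\to\mathbb{R}$ be a continuous $L$-periodic even function with $V_{min}\le V(x)\le V_{max}$ for all $x$. Let $\omega>-V_{min}$, $\tilde V(x)=\omega+V(x)$, $\lambda_j^2$ and $\rho_j$ ($j=1,2$) as below, and assume $$\min_{y\in[\rho_1,\rho_2],\ x\in[0,L]}\big\{5y^4+3g_1y^2-\tilde V(x)\big\}>0 .$$ Then there exist a positive $L$-periodic solution $\phi_+$ of $$\phi_{xx}+\tilde V(x)\phi-g_1\phi^3-\phi^5=0$$ with $\rho_1\le\phi_+\le\rho_2$, and an odd solution $\phi$ of the same equation on $\mathbb{R}$ (a dark soliton, giving the stationary solution $\psi(t,x)=e^{-i\omega t}\phi(x)$ of $i\psi_t+\psi_{xx}+V(x)\psi-g_1|\psi|^2\psi-|\psi|^4\psi=0$) such that $\phi(x)-\phi_+(x)\to0$ and $\phi_x(x)-\phi_{+,x}(x)\to 0$ as $x\to+\infty$, and $\phi(x)-\phi_-(x)\to0$ as $x\to-\infty$, where $\phi_-=-\phi_+$.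
   Context: $\lambda_1^2=\omega+V_{min}$, $\lambda_2^2=\omega+V_{max}$, and $\rho_j=\sqrt{\sqrt{g_1^2+4\lambda_j^2}-g_1}/\sqrt 2$ for $j=1,2$ (the positive nontrivial equilibria of $\phi_{xx}+\lambda_j^2\phi-g_1\phi^3-\phi^5=0$). *)

theory Defs
  imports "HOL-Analysis.Analysis"
begin

definition rho :: "real \<Rightarrow> real \<Rightarrow> real" where
  "rho g1 lam2 = sqrt (sqrt (g1^2 + 4 * lam2) - g1) / sqrt 2"

definition is_solution :: "(real \<Rightarrow> real) \<Rightarrow> real \<Rightarrow> (real \<Rightarrow> real) \<Rightarrow> bool" where
  "is_solution Vt g1 phi \<longleftrightarrow> (\<exists>phi' phi''.
      (\<forall>x. (phi has_real_derivative phi' x) (at x)) \<and>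
      (\<forall>x. (phi' has_real_derivative phi'' x) (at x)) \<and>
      (\<forall>x. phi'' x + Vt x * phi x - g1 * phi x ^ 3 - phi x ^ 5 = 0))"

end

theory Submission
  imports Defs
begin


lemma exp_half_integrable:
  fixes k :: real assumes k: "k > 0"
  shows "integrable lborel (\<lambda>y::real. if 0 \<le> y then exp (-(k*y)) else 0)"
proof -
  have h0: "((\<lambda>x::real. exp (-k*x)) has_integral 1/k) {0..}"
    using has_integral_exp_minus_to_infinity[of k 0] k by simp
  have e: "(\<lambda>y::real. if 0 \<le> y then exp (-(k*y)) else 0) = (\<lambda>x. if x \<in> {0..} then exp (-k*x) else 0)"
    by auto
  have "((\<lambda>y::real. if 0 \<le> y then exp (-(k*y)) else 0) has_integral 1/k) UNIV"
    unfolding e has_integral_restrict_UNIV by (rule h0)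
  then have "integral\<^sup>N lborel (\<lambda>y::real. if 0 \<le> y then exp (-(k*y)) else 0) = 1/k"
    by (intro nn_integral_has_integral_lborel) auto
  then show ?thesis
    by (intro integrableI_nn_integral_finite[where x="1/k"]) auto
qed

lemma exp_abs_integrable:
  fixes k :: real assumes k: "k > 0"
  shows "integrable lborel (\<lambda>y::real. exp (-(k*\<bar>x - y\<bar>)))"
proof -
  let ?g = "\<lambda>y::real. if 0 \<le> y then exp (-(k*y)) else 0"
  have g: "integrable lborel ?g" by (rule exp_half_integrable[OF k])
  have g2: "integrable lborel (\<lambda>y. ?g (0 + (-1) * y))"
    by (rule lborel_integrable_real_affine[OF g]) auto
  have s: "integrable lborel (\<lambda>y. ?g y + ?g (0 + (-1) * y))"
    by (rule Bochner_Integration.integrable_add[OF g g2])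
  have ab: "integrable lborel (\<lambda>y::real. exp (-(k*\<bar>y\<bar>)))"
    by (rule Bochner_Integration.integrable_bound[OF s]) auto
  have "integrable lborel (\<lambda>y. exp (-(k*\<bar>(x + (-1) * y)\<bar>)))"
    by (rule lborel_integrable_real_affine[OF ab]) auto
  then show ?thesis by (simp add: abs_minus_commute)
qed


lemma Icc_piece:
  fixes q :: "real \<Rightarrow> real"
  assumes q: "continuous_on UNIV q" and cz: "c \<le> z"
    and i1: "integrable lborel (\<lambda>y. if y \<le> z then q y else 0)"
    and i2: "integrable lborel (\<lambda>y. if y \<le> c then q y else 0)"
  shows "(LINT y|lborel. (if y \<le> z then q y else 0)) - (LINT y|lborel. (if y \<le> c then q y else 0))
         = integral {c..z} q"
proof -
  have qm[measurable]: "q \<in> borel_measurable borel" using q by (rule borel_measurable_continuous_onI)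
  have si: "set_integrable lborel {c..z} q"
    by (rule borel_integrable_atLeastAtMost') (use q continuous_on_subset in blast)
  have "(LINT y|lborel. (if y \<le> z then q y else 0)) - (LINT y|lborel. (if y \<le> c then q y else 0))
      = (LINT y|lborel. (if y \<le> z then q y else 0) - (if y \<le> c then q y else 0))"
    using i1 i2 by (rule Bochner_Integration.integral_diff[symmetric])
  also have "\<dots> = (LINT y|lborel. indicator {c..z} y *\<^sub>R q y)"
  proof (rule integral_cong_AE)
    show "AE y in lborel. (if y \<le> z then q y else 0) - (if y \<le> c then q y else 0) = indicator {c..z} y *\<^sub>R q y"
      using AE_lborel_singleton[of c] by eventually_elim (use cz in \<open>auto simp: indicator_def\<close>)
  qed auto
  also have "\<dots> = (LINT y:{c..z}|lborel. q y)" by (simp add: set_lebesgue_integral_def)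
  also have "\<dots> = integral {c..z} q" using set_borel_integral_eq_integral(2)[OF si] .
  finally show ?thesis .
qed

lemma deriv_upper:
  fixes q :: "real \<Rightarrow> real"
  assumes q: "continuous_on UNIV q"
    and ii: "\<And>z. integrable lborel (\<lambda>y. if y \<le> z then q y else 0)"
  shows "((\<lambda>z. LINT y|lborel. (if y \<le> z then q y else 0)) has_real_derivative q x) (at x)"
proof -
  let ?P = "\<lambda>z. LINT y|lborel. (if y \<le> z then q y else 0)"
  define c where "c = x - 1"
  define b where "b = x + 1"
  have "((\<lambda>z. integral {c..z} q) has_real_derivative q x) (at x within {c..b})"
    by (rule integral_has_real_derivative) (use q continuous_on_subset c_def b_def in auto)
  then have "((\<lambda>z. integral {c..z} q) has_real_derivative q x) (at x within {c<..<b})"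
    by (rule DERIV_subset) auto
  then have d1: "((\<lambda>z. integral {c..z} q) has_real_derivative q x) (at x)"
    using at_within_open[of x "{c<..<b}"] c_def b_def by auto
  have d2: "((\<lambda>z. ?P c + integral {c..z} q) has_real_derivative q x) (at x)"
    using DERIV_add[OF DERIV_const d1] by simp
  show ?thesis
  proof (rule has_field_derivative_transform_within_open[OF d2, of "{c<..}"])
    fix z assume "z \<in> {c<..}"
    then show "?P c + integral {c..z} q = ?P z"
      using Icc_piece[OF q _ ii ii, of c z] by auto
  qed (auto simp: c_def)
qed

lemma deriv_lower:
  fixes q :: "real \<Rightarrow> real"
  assumes q: "continuous_on UNIV q"
    and ii: "\<And>z. integrable lborel (\<lambda>y. if z < y then q y else 0)"
    and iq: "integrable lborel q"
  shows "((\<lambda>z. LINT y|lborel. (if z < y then q y else 0)) has_real_derivative - q x) (at x)"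
proof -
  have qm[measurable]: "q \<in> borel_measurable borel" using q by (rule borel_measurable_continuous_onI)
  have ii2: "integrable lborel (\<lambda>y. if y \<le> z then q y else 0)" for z
  proof -
    have "integrable lborel (\<lambda>y. q y - (if z < y then q y else 0))"
      using iq ii by (rule Bochner_Integration.integrable_diff)
    moreover have "(\<lambda>y. q y - (if z < y then q y else 0)) = (\<lambda>y. if y \<le> z then q y else 0)"
      by auto
    ultimately show ?thesis by simp
  qed
  have eq: "(LINT y|lborel. (if z < y then q y else 0)) = (LINT y|lborel. q y) - (LINT y|lborel. (if y \<le> z then q y else 0))" for z
  proof -
    have "(LINT y|lborel. q y) - (LINT y|lborel. (if y \<le> z then q y else 0)) = (LINT y|lborel. q y - (if y \<le> z then q y else 0))"
      using iq ii2 by (rule Bochner_Integration.integral_diff[symmetric])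
    also have "(\<lambda>y. q y - (if y \<le> z then q y else 0)) = (\<lambda>y. if z < y then q y else 0)" by auto
    finally show ?thesis by simp
  qed
  show ?thesis
    unfolding eq using DERIV_diff[OF DERIV_const deriv_upper[OF q ii2]] by simp
qed

lemma Icc_piece2:
  fixes q :: "real \<Rightarrow> real"
  assumes q: "continuous_on UNIV q" and cz: "c \<le> z"
    and i1: "integrable lborel (\<lambda>y. if z < y then q y else 0)"
    and i2: "integrable lborel (\<lambda>y. if c < y then q y else 0)"
  shows "(LINT y|lborel. (if c < y then q y else 0)) - (LINT y|lborel. (if z < y then q y else 0))
         = integral {c..z} q"
proof -
  have qm[measurable]: "q \<in> borel_measurable borel" using q by (rule borel_measurable_continuous_onI)
  have si: "set_integrable lborel {c..z} q"
    by (rule borel_integrable_atLeastAtMost') (use q continuous_on_subset in blast)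
  have "(LINT y|lborel. (if c < y then q y else 0)) - (LINT y|lborel. (if z < y then q y else 0))
      = (LINT y|lborel. (if c < y then q y else 0) - (if z < y then q y else 0))"
    using i2 i1 by (rule Bochner_Integration.integral_diff[symmetric])
  also have "\<dots> = (LINT y|lborel. indicator {c..z} y *\<^sub>R q y)"
  proof (rule integral_cong_AE)
    show "AE y in lborel. (if c < y then q y else 0) - (if z < y then q y else 0) = indicator {c..z} y *\<^sub>R q y"
      using AE_lborel_singleton[of c] by eventually_elim (use cz in \<open>auto simp: indicator_def\<close>)
  qed auto
  also have "\<dots> = (LINT y:{c..z}|lborel. q y)" by (simp add: set_lebesgue_integral_def)
  also have "\<dots> = integral {c..z} q" using set_borel_integral_eq_integral(2)[OF si] .
  finally show ?thesis .
qed

lemma deriv_lower2: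
  fixes q :: "real \<Rightarrow> real"
  assumes q: "continuous_on UNIV q"
    and ii: "\<And>z. integrable lborel (\<lambda>y. if z < y then q y else 0)"
  shows "((\<lambda>z. LINT y|lborel. (if z < y then q y else 0)) has_real_derivative - q x) (at x)"
proof -
  let ?P = "\<lambda>z. LINT y|lborel. (if z < y then q y else 0)"
  define c where "c = x - 1"
  define b where "b = x + 1"
  have "((\<lambda>z. integral {c..z} q) has_real_derivative q x) (at x within {c..b})"
    by (rule integral_has_real_derivative) (use q continuous_on_subset c_def b_def in auto)
  then have "((\<lambda>z. integral {c..z} q) has_real_derivative q x) (at x within {c<..<b})"
    by (rule DERIV_subset) auto
  then have d1: "((\<lambda>z. integral {c..z} q) has_real_derivative q x) (at x)"
    using at_within_open[of x "{c<..<b}"] c_def b_def by auto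
  have d2: "((\<lambda>z. ?P c - integral {c..z} q) has_real_derivative - q x) (at x)"
    using DERIV_diff[OF DERIV_const d1] by simp
  show ?thesis
  proof (rule has_field_derivative_transform_within_open[OF d2, of "{c<..}"])
    fix z assume "z \<in> {c<..}"
    then show "?P c - integral {c..z} q = ?P z"
      using Icc_piece2[OF q _ ii ii, of c z] by auto
  qed (auto simp: c_def)
qed


definition Gr :: "real \<Rightarrow> (real \<Rightarrow> real) \<Rightarrow> real \<Rightarrow> real" where
  "Gr k h x = (LINT y|lborel. exp (-(k*\<bar>x-y\<bar>)) * h y) / (2*k)"

definition Aa :: "real \<Rightarrow> (real \<Rightarrow> real) \<Rightarrow> real \<Rightarrow> real" where
  "Aa k h x = (LINT y|lborel. (if y \<le> x then exp (k*y) * h y else 0))"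

definition Bb :: "real \<Rightarrow> (real \<Rightarrow> real) \<Rightarrow> real \<Rightarrow> real" where
  "Bb k h x = (LINT y|lborel. (if x < y then exp (-(k*y)) * h y else 0))"

definition Gd :: "real \<Rightarrow> (real \<Rightarrow> real) \<Rightarrow> real \<Rightarrow> real" where
  "Gd k h x = (- exp (-(k*x)) * Aa k h x + exp (k*x) * Bb k h x) / 2"

lemma kint:
  fixes g :: "real \<Rightarrow> real"
  assumes k: "k > 0" and g: "g \<in> borel_measurable borel"
    and b: "\<And>y. \<bar>g y\<bar> \<le> C * exp (-(k*\<bar>x-y\<bar>))"
  shows "integrable lborel g"
proof -
  have "integrable lborel (\<lambda>y. C * exp (-(k*\<bar>x-y\<bar>)))"
    using exp_abs_integrable[OF k, of x] by simp
  then show ?thesis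
  proof (rule Bochner_Integration.integrable_bound)
    show "g \<in> borel_measurable lborel" using g by simp
    show "AE y in lborel. norm (g y) \<le> norm (C * exp (-(k*\<bar>x-y\<bar>)))"
      using b by (auto intro: order_trans abs_ge_self)
  qed
qed

lemma expA: "(y::real) \<le> x \<Longrightarrow> exp (k*y) = exp (k*x) * exp (-(k*\<bar>x-y\<bar>))"
proof -
  assume a: "y \<le> x"
  then have "\<bar>x-y\<bar> = x - y" by arith
  then have "k*y = k*x + -(k*\<bar>x-y\<bar>)" by (simp add: algebra_simps)
  then show ?thesis by (simp add: exp_add[symmetric])
qed

lemma expB: "(x::real) < y \<Longrightarrow> exp (-(k*y)) = exp (-(k*x)) * exp (-(k*\<bar>x-y\<bar>))"
proof -
  assume a: "x < y"
  then have "\<bar>x-y\<bar> = y - x" by arith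
  then have "-(k*y) = -(k*x) + -(k*\<bar>x-y\<bar>)" by (simp add: algebra_simps)
  then show ?thesis by (simp add: exp_add[symmetric])
qed

locale hyp =
  fixes k M :: real and h :: "real \<Rightarrow> real"
  assumes k: "k > 0" and hc: "continuous_on UNIV h" and hb: "\<And>y. \<bar>h y\<bar> \<le> M"
begin

lemma hm[measurable]: "h \<in> borel_measurable borel"
  using hc by (rule borel_measurable_continuous_onI)

lemma M0: "0 \<le> M" using hb[of 0] by linarith

lemma int_kern: "integrable lborel (\<lambda>y. exp (-(k*\<bar>x-y\<bar>)) * h y)"
  by (rule kint[OF k, where C=M]) (auto simp: abs_mult intro: mult_left_mono[OF hb, simplified mult.commute])

lemma int_A: "integrable lborel (\<lambda>y. if y \<le> x then exp (k*y) * h y else 0)"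
proof (rule kint[OF k, where C="M * exp (k*x)"])
  fix y show "\<bar>if y \<le> x then exp (k*y) * h y else 0\<bar> \<le> M * exp (k*x) * exp (-(k*\<bar>x-y\<bar>))"
  proof (cases "y \<le> x")
    case True
    have "\<bar>exp (k*y) * h y\<bar> = exp (k*y) * \<bar>h y\<bar>" by (simp add: abs_mult)
    also have "\<dots> \<le> exp (k*y) * M" by (rule mult_left_mono[OF hb]) simp
    also have "\<dots> = M * exp (k*x) * exp (-(k*\<bar>x-y\<bar>))" using expA[OF True, of k] by simp
    finally show ?thesis using True by simp
  qed (use M0 in simp)
qed simp

lemma int_B: "integrable lborel (\<lambda>y. if x < y then exp (-(k*y)) * h y else 0)"
proof (rule kint[OF k, where C="M * exp (-(k*x))"])
  fix y show "\<bar>if x < y then exp (-(k*y)) * h y else 0\<bar> \<le> M * exp (-(k*x)) * exp (-(k*\<bar>x-y\<bar>))"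
  proof (cases "x < y")
    case True
    have "\<bar>exp (-(k*y)) * h y\<bar> = exp (-(k*y)) * \<bar>h y\<bar>" by (simp add: abs_mult)
    also have "\<dots> \<le> exp (-(k*y)) * M" by (rule mult_left_mono[OF hb]) simp
    also have "\<dots> = M * exp (-(k*x)) * exp (-(k*\<bar>x-y\<bar>))" using expB[OF True, of k] by simp
    finally show ?thesis using True by simp
  qed (use M0 in simp)
qed simp

lemma Gr_AB: "Gr k h x = (exp (-(k*x)) * Aa k h x + exp (k*x) * Bb k h x) / (2*k)"
proof -
  have e: "(\<lambda>y. exp (-(k*\<bar>x-y\<bar>)) * h y) = (\<lambda>y. exp (-(k*x)) * (if y \<le> x then exp (k*y) * h y else 0)
      + exp (k*x) * (if x < y then exp (-(k*y)) * h y else 0))"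
  proof
    fix y show "exp (-(k*\<bar>x-y\<bar>)) * h y = exp (-(k*x)) * (if y \<le> x then exp (k*y) * h y else 0)
      + exp (k*x) * (if x < y then exp (-(k*y)) * h y else 0)"
    proof (cases "y \<le> x")
      case True then show ?thesis using expA[OF True, of k] by (simp add: exp_minus field_simps)
    next
      case False then have "x < y" by simp
      then show ?thesis using expB[OF \<open>x<y\<close>, of k] False by (simp add: exp_minus field_simps)
    qed
  qed
  have "(LINT y|lborel. exp (-(k*\<bar>x-y\<bar>)) * h y) = exp (-(k*x)) * Aa k h x + exp (k*x) * Bb k h x"
    unfolding e Aa_def Bb_def
    by (subst Bochner_Integration.integral_add) (auto intro!: int_A int_B)
  then show ?thesis unfolding Gr_def by simp
qed

lemma Aa_deriv: "(Aa k h has_real_derivative exp (k*x) * h x) (at x)"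
  unfolding Aa_def[abs_def]
  by (rule deriv_upper[where q="\<lambda>y. exp (k*y) * h y", OF _ int_A])
     (intro continuous_intros hc)

lemma Bb_deriv: "(Bb k h has_real_derivative - (exp (-(k*x)) * h x)) (at x)"
  unfolding Bb_def[abs_def]
  by (rule deriv_lower2[where q="\<lambda>y. exp (-(k*y)) * h y", OF _ int_B])
     (intro continuous_intros hc)

lemma Gr_deriv: "(Gr k h has_real_derivative Gd k h x) (at x)"
proof -
  have eq: "Gr k h = (\<lambda>x. (exp (-(k*x)) * Aa k h x + exp (k*x) * Bb k h x) / (2*k))"
    using Gr_AB by auto
  have "((\<lambda>x. (exp (-(k*x)) * Aa k h x + exp (k*x) * Bb k h x) / (2*k)) has_real_derivative
     ((exp (-(k*x)) * (-k) * Aa k h x + exp (-(k*x)) * (exp (k*x) * h x)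
      + (exp (k*x) * k * Bb k h x + exp (k*x) * (- (exp (-(k*x)) * h x)))) / (2*k))) (at x)"
    using Aa_deriv[of x] Bb_deriv[of x] k by (auto intro!: derivative_eq_intros simp: field_simps)
  moreover have "((exp (-(k*x)) * (-k) * Aa k h x + exp (-(k*x)) * (exp (k*x) * h x)
      + (exp (k*x) * k * Bb k h x + exp (k*x) * (- (exp (-(k*x)) * h x)))) / (2*k)) = Gd k h x"
    using k unfolding Gd_def by (simp add: field_simps exp_minus)
  ultimately show ?thesis unfolding eq by (rule DERIV_cong)
qed

lemma Gd_deriv: "(Gd k h has_real_derivative (k^2 * Gr k h x - h x)) (at x)"
proof -
  have eq: "Gd k h = (\<lambda>x. (- exp (-(k*x)) * Aa k h x + exp (k*x) * Bb k h x) / 2)"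
    by (auto simp: Gd_def[abs_def])
  have "((\<lambda>x. (- exp (-(k*x)) * Aa k h x + exp (k*x) * Bb k h x) / 2) has_real_derivative
     ((- (exp (-(k*x)) * (-k)) * Aa k h x + (- exp (-(k*x))) * (exp (k*x) * h x)
      + (exp (k*x) * k * Bb k h x + exp (k*x) * (- (exp (-(k*x)) * h x)))) / 2)) (at x)"
    using Aa_deriv[of x] Bb_deriv[of x] k by (auto intro!: derivative_eq_intros simp: field_simps)
  moreover have "((- (exp (-(k*x)) * (-k)) * Aa k h x + (- exp (-(k*x))) * (exp (k*x) * h x)
      + (exp (k*x) * k * Bb k h x + exp (k*x) * (- (exp (-(k*x)) * h x)))) / 2) = k^2 * Gr k h x - h x"
    using k unfolding Gr_AB by (simp add: field_simps exp_minus power2_eq_square)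
  ultimately show ?thesis unfolding eq by (rule DERIV_cong)
qed

end


definition Ik :: "real \<Rightarrow> real" where "Ik k = (LINT y|lborel. exp (-(k*\<bar>y\<bar>)))"

lemma Ik_shift: "(LINT y|lborel. exp (-(k*\<bar>x-y\<bar>))) = Ik k"
proof -
  have "(LINT y|lborel. exp (-(k*\<bar>x-y\<bar>))) = \<bar>1::real\<bar> *\<^sub>R (LINT y|lborel. exp (-(k*\<bar>x-(x + 1*y)\<bar>)))"
    by (rule lborel_integral_real_affine) simp
  then show ?thesis by (simp add: Ik_def)
qed

context hyp begin

lemma Aa_bound: "\<bar>Aa k h x\<bar> \<le> M * exp (k*x) * Ik k"
proof -
  have "\<bar>Aa k h x\<bar> \<le> (LINT y|lborel. \<bar>if y \<le> x then exp (k*y) * h y else 0\<bar>)"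
    unfolding Aa_def by (rule integral_abs_bound)
  also have "\<dots> \<le> (LINT y|lborel. M * exp (k*x) * exp (-(k*\<bar>x-y\<bar>)))"
  proof (rule integral_mono)
    show "integrable lborel (\<lambda>y. \<bar>if y \<le> x then exp (k*y) * h y else 0\<bar>)"
      using int_A by (rule integrable_abs)
    show "integrable lborel (\<lambda>y. M * exp (k*x) * exp (-(k*\<bar>x-y\<bar>)))"
      using exp_abs_integrable[OF k, of x] by simp
    fix y show "\<bar>if y \<le> x then exp (k*y) * h y else 0\<bar> \<le> M * exp (k*x) * exp (-(k*\<bar>x-y\<bar>))"
    proof (cases "y \<le> x")
      case True
      have "\<bar>exp (k*y) * h y\<bar> = exp (k*y) * \<bar>h y\<bar>" by (simp add: abs_mult)
      also have "\<dots> \<le> exp (k*y) * M" by (rule mult_left_mono[OF hb]) simp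
      also have "\<dots> = M * exp (k*x) * exp (-(k*\<bar>x-y\<bar>))" using expA[OF True, of k] by simp
      finally show ?thesis using True by simp
    qed (use M0 in simp)
  qed
  also have "\<dots> = M * exp (k*x) * Ik k" using Ik_shift[of k x] by simp
  finally show ?thesis .
qed

lemma Bb_bound: "\<bar>Bb k h x\<bar> \<le> M * exp (-(k*x)) * Ik k"
proof -
  have "\<bar>Bb k h x\<bar> \<le> (LINT y|lborel. \<bar>if x < y then exp (-(k*y)) * h y else 0\<bar>)"
    unfolding Bb_def by (rule integral_abs_bound)
  also have "\<dots> \<le> (LINT y|lborel. M * exp (-(k*x)) * exp (-(k*\<bar>x-y\<bar>)))"
  proof (rule integral_mono)
    show "integrable lborel (\<lambda>y. \<bar>if x < y then exp (-(k*y)) * h y else 0\<bar>)"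
      using int_B by (rule integrable_abs)
    show "integrable lborel (\<lambda>y. M * exp (-(k*x)) * exp (-(k*\<bar>x-y\<bar>)))"
      using exp_abs_integrable[OF k, of x] by simp
    fix y show "\<bar>if x < y then exp (-(k*y)) * h y else 0\<bar> \<le> M * exp (-(k*x)) * exp (-(k*\<bar>x-y\<bar>))"
    proof (cases "x < y")
      case True
      have "\<bar>exp (-(k*y)) * h y\<bar> = exp (-(k*y)) * \<bar>h y\<bar>" by (simp add: abs_mult)
      also have "\<dots> \<le> exp (-(k*y)) * M" by (rule mult_left_mono[OF hb]) simp
      also have "\<dots> = M * exp (-(k*x)) * exp (-(k*\<bar>x-y\<bar>))" using expB[OF True, of k] by simp
      finally show ?thesis using True by simp
    qed (use M0 in simp)
  qed
  also have "\<dots> = M * exp (-(k*x)) * Ik k" using Ik_shift[of k x] by simp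
  finally show ?thesis .
qed

lemma Gd_bound: "\<bar>Gd k h x\<bar> \<le> M * Ik k"
proof -
  have "\<bar>Gd k h x\<bar> \<le> (exp (-(k*x)) * \<bar>Aa k h x\<bar> + exp (k*x) * \<bar>Bb k h x\<bar>) / 2"
  proof -
    have "\<bar>- exp (-(k*x)) * Aa k h x + exp (k*x) * Bb k h x\<bar> \<le> \<bar>exp (-(k*x)) * Aa k h x\<bar> + \<bar>exp (k*x) * Bb k h x\<bar>"
      by (rule order_trans[OF abs_triangle_ineq]) simp
    then show ?thesis unfolding Gd_def by (simp add: abs_mult)
  qed
  also have "\<dots> \<le> (exp (-(k*x)) * (M * exp (k*x) * Ik k) + exp (k*x) * (M * exp (-(k*x)) * Ik k)) / 2"
    by (intro divide_right_mono add_mono mult_left_mono Aa_bound Bb_bound) auto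
  also have "\<dots> = M * Ik k" by (simp add: exp_minus field_simps)
  finally show ?thesis .
qed

lemma Gr_bound: "\<bar>Gr k h x\<bar> \<le> M * Ik k / k"
proof -
  have "\<bar>Gr k h x\<bar> \<le> (exp (-(k*x)) * \<bar>Aa k h x\<bar> + exp (k*x) * \<bar>Bb k h x\<bar>) / (2*k)"
  proof -
    have "\<bar>exp (-(k*x)) * Aa k h x + exp (k*x) * Bb k h x\<bar> \<le> \<bar>exp (-(k*x)) * Aa k h x\<bar> + \<bar>exp (k*x) * Bb k h x\<bar>"
      by (rule abs_triangle_ineq)
    then show ?thesis unfolding Gr_AB using k by (simp add: abs_mult divide_right_mono)
  qed
  also have "\<dots> \<le> (exp (-(k*x)) * (M * exp (k*x) * Ik k) + exp (k*x) * (M * exp (-(k*x)) * Ik k)) / (2*k)"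
    using k by (intro divide_right_mono add_mono mult_left_mono Aa_bound Bb_bound) auto
  also have "\<dots> = M * Ik k / k" using k by (simp add: exp_minus field_simps)
  finally show ?thesis .
qed

lemma Gr_lip: "\<bar>Gr k h x - Gr k h y\<bar> \<le> M * Ik k * \<bar>x - y\<bar>"
proof -
  have main: "\<bar>Gr k h b - Gr k h a\<bar> \<le> M * Ik k * (b - a)" if ab: "a < b" for a b
  proof -
    obtain z where "Gr k h b - Gr k h a = (b - a) * Gd k h z"
      using MVT2[OF ab Gr_deriv] by blast
    then have "\<bar>Gr k h b - Gr k h a\<bar> = (b - a) * \<bar>Gd k h z\<bar>" using ab by (simp add: abs_mult)
    also have "\<dots> \<le> (b - a) * (M * Ik k)" using ab Gd_bound by (intro mult_left_mono) auto
    finally show ?thesis by (simp add: mult.commute)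
  qed
  show ?thesis
  proof (cases x y rule: linorder_cases)
    case less then show ?thesis using main[OF less] by (simp add: abs_minus_commute)
  next
    case greater then show ?thesis using main[OF greater] by simp
  qed simp
qed

end

lemma Gr_mono:
  assumes "hyp k M1 h1" "hyp k M2 h2" and le: "\<And>y. h1 y \<le> h2 y"
  shows "Gr k h1 x \<le> Gr k h2 x"
proof -
  have "(LINT y|lborel. exp (-(k*\<bar>x-y\<bar>)) * h1 y) \<le> (LINT y|lborel. exp (-(k*\<bar>x-y\<bar>)) * h2 y)"
    using hyp.int_kern[OF assms(1)] hyp.int_kern[OF assms(2)]
    by (rule integral_mono) (simp add: le mult_left_mono)
  then show ?thesis unfolding Gr_def using hyp.k[OF assms(1)] by (simp add: divide_right_mono)
qed

lemma Gr_shift: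
  assumes per: "\<And>y. h (y + L) = h y"
  shows "Gr k h (x + L) = Gr k h x"
proof -
  have "(LINT y|lborel. exp (-(k*\<bar>x + L - y\<bar>)) * h y) =
     \<bar>1::real\<bar> *\<^sub>R (LINT y|lborel. exp (-(k*\<bar>x + L - (L + 1*y)\<bar>)) * h (L + 1*y))"
    by (rule lborel_integral_real_affine) simp
  also have "\<dots> = (LINT y|lborel. exp (-(k*\<bar>x - y\<bar>)) * h y)"
    using per by (simp add: add.commute)
  finally show ?thesis unfolding Gr_def by simp
qed

lemma Gr_reflect: "Gr k h (- x) = Gr k (\<lambda>y. h (- y)) x"
proof -
  have "(LINT y|lborel. exp (-(k*\<bar>- x - y\<bar>)) * h y) =
     \<bar>-1::real\<bar> *\<^sub>R (LINT y|lborel. exp (-(k*\<bar>- x - (0 + (-1)*y)\<bar>)) * h (0 + (-1)*y))"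
    by (rule lborel_integral_real_affine) simp
  also have "\<dots> = (LINT y|lborel. exp (-(k*\<bar>x - y\<bar>)) * h (- y))"
    by (simp add: abs_minus_commute)
  finally show ?thesis unfolding Gr_def by simp
qed


context hyp begin

lemma int_P: "integrable lborel (\<lambda>y. if 0 \<le> y then exp (-(k*\<bar>x-y\<bar>)) * h y else 0)"
  by (rule kint[OF k, where C=M]) (auto simp: abs_mult M0 intro: mult_left_mono[OF hb, simplified mult.commute])

lemma int_Q: "integrable lborel (\<lambda>y. if 0 \<le> y then exp (-(k*\<bar>x+y\<bar>)) * h y else 0)"
proof (rule kint[OF k, where C=M and x="-x"])
  fix y
  have "\<bar>exp (-(k*\<bar>x+y\<bar>)) * h y\<bar> \<le> M * exp (-(k*\<bar>x+y\<bar>))"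
    using mult_left_mono[OF hb[of y], of "exp (-(k*\<bar>x+y\<bar>))"] by (simp add: abs_mult mult.commute)
  moreover have "\<bar>x+y\<bar> = \<bar>-x-y\<bar>" by arith
  ultimately show "\<bar>if 0 \<le> y then exp (-(k*\<bar>x+y\<bar>)) * h y else 0\<bar> \<le> M * exp (-(k*\<bar>-x-y\<bar>))"
    using M0 by auto
qed simp

lemma int_N: "integrable lborel (\<lambda>y. if y < 0 then exp (-(k*\<bar>x-y\<bar>)) * h y else 0)"
  by (rule kint[OF k, where C=M]) (auto simp: abs_mult M0 intro: mult_left_mono[OF hb, simplified mult.commute])

lemma odd_split:
  assumes odd: "\<And>y. h (-y) = - h y"
  shows "(LINT y|lborel. exp (-(k*\<bar>x-y\<bar>)) * h y) =
     (LINT y|lborel. (if 0 \<le> y then (exp (-(k*\<bar>x-y\<bar>)) - exp (-(k*\<bar>x+y\<bar>))) * h y else 0))"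
proof -
  have h0: "h 0 = 0" using odd[of 0] by simp
  have e1: "(\<lambda>y. exp (-(k*\<bar>x-y\<bar>)) * h y) = (\<lambda>y. (if 0 \<le> y then exp (-(k*\<bar>x-y\<bar>)) * h y else 0)
     + (if y < 0 then exp (-(k*\<bar>x-y\<bar>)) * h y else 0))" by auto
  have "(LINT y|lborel. (if y < 0 then exp (-(k*\<bar>x-y\<bar>)) * h y else 0)) =
     \<bar>-1::real\<bar> *\<^sub>R (LINT y|lborel. (if 0 + (-1)*y < 0 then exp (-(k*\<bar>x-(0 + (-1)*y)\<bar>)) * h (0 + (-1)*y) else 0))"
    by (rule lborel_integral_real_affine) simp
  also have "\<dots> = (LINT y|lborel. - (if 0 \<le> y then exp (-(k*\<bar>x+y\<bar>)) * h y else 0))"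
  proof -
    have ptw: "(if 0 + (-1)*y < 0 then exp (-(k*\<bar>x-(0 + (-1)*y)\<bar>)) * h (0 + (-1)*y) else 0)
       = - (if 0 \<le> y then exp (-(k*\<bar>x+y\<bar>)) * h y else 0)" for y
      by (auto simp: odd h0)
    show ?thesis by (simp only: ptw abs_minus_cancel abs_one scaleR_one)
  qed
  also have "\<dots> = - (LINT y|lborel. (if 0 \<le> y then exp (-(k*\<bar>x+y\<bar>)) * h y else 0))"
    by (rule Bochner_Integration.integral_minus)
  finally have eN: "(LINT y|lborel. (if y < 0 then exp (-(k*\<bar>x-y\<bar>)) * h y else 0)) =
     - (LINT y|lborel. (if 0 \<le> y then exp (-(k*\<bar>x+y\<bar>)) * h y else 0))" .
  have "(LINT y|lborel. exp (-(k*\<bar>x-y\<bar>)) * h y) =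
     (LINT y|lborel. (if 0 \<le> y then exp (-(k*\<bar>x-y\<bar>)) * h y else 0))
     + (LINT y|lborel. (if y < 0 then exp (-(k*\<bar>x-y\<bar>)) * h y else 0))"
    unfolding e1 by (rule Bochner_Integration.integral_add[OF int_P int_N])
  also have "\<dots> = (LINT y|lborel. (if 0 \<le> y then exp (-(k*\<bar>x-y\<bar>)) * h y else 0))
     - (LINT y|lborel. (if 0 \<le> y then exp (-(k*\<bar>x+y\<bar>)) * h y else 0))"
    using eN by simp
  also have "\<dots> = (LINT y|lborel. (if 0 \<le> y then exp (-(k*\<bar>x-y\<bar>)) * h y else 0)
     - (if 0 \<le> y then exp (-(k*\<bar>x+y\<bar>)) * h y else 0))"
    by (rule Bochner_Integration.integral_diff[symmetric, OF int_P int_Q])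
  also have "\<dots> = (LINT y|lborel. (if 0 \<le> y then (exp (-(k*\<bar>x-y\<bar>)) - exp (-(k*\<bar>x+y\<bar>))) * h y else 0))"
    by (rule Bochner_Integration.integral_cong) (auto simp: algebra_simps)
  finally show ?thesis .
qed

lemma int_split: "integrable lborel (\<lambda>y. if 0 \<le> y then (exp (-(k*\<bar>x-y\<bar>)) - exp (-(k*\<bar>x+y\<bar>))) * h y else 0)"
proof -
  have "integrable lborel (\<lambda>y. (if 0 \<le> y then exp (-(k*\<bar>x-y\<bar>)) * h y else 0)
     - (if 0 \<le> y then exp (-(k*\<bar>x+y\<bar>)) * h y else 0))"
    by (rule Bochner_Integration.integrable_diff[OF int_P int_Q])
  moreover have "(\<lambda>y. (if 0 \<le> y then exp (-(k*\<bar>x-y\<bar>)) * h y else 0)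
     - (if 0 \<le> y then exp (-(k*\<bar>x+y\<bar>)) * h y else 0)) =
     (\<lambda>y. if 0 \<le> y then (exp (-(k*\<bar>x-y\<bar>)) - exp (-(k*\<bar>x+y\<bar>))) * h y else 0)"
    by (auto simp: algebra_simps)
  ultimately show ?thesis by simp
qed

end

lemma kern_pos: "(k::real) > 0 \<Longrightarrow> 0 \<le> x \<Longrightarrow> 0 \<le> y \<Longrightarrow> exp (-(k*\<bar>x+y\<bar>)) \<le> exp (-(k*\<bar>x-y\<bar>))"
proof -
  assume k: "k > 0" and "0 \<le> x" "0 \<le> y"
  then have "\<bar>x-y\<bar> \<le> \<bar>x+y\<bar>" by arith
  then show ?thesis using k by (simp add: mult_left_mono)
qed

lemma Gr_odd_mono:
  assumes H1: "hyp k M1 h1" and H2: "hyp k M2 h2"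
    and o1: "\<And>y. h1 (-y) = - h1 y" and o2: "\<And>y. h2 (-y) = - h2 y"
    and le: "\<And>y. 0 \<le> y \<Longrightarrow> h1 y \<le> h2 y" and x: "0 \<le> x"
  shows "Gr k h1 x \<le> Gr k h2 x"
proof -
  have k: "k > 0" using hyp.k[OF H1] .
  have "(LINT y|lborel. exp (-(k*\<bar>x-y\<bar>)) * h1 y) \<le> (LINT y|lborel. exp (-(k*\<bar>x-y\<bar>)) * h2 y)"
    unfolding hyp.odd_split[OF H1 o1] hyp.odd_split[OF H2 o2]
  proof (rule integral_mono[OF hyp.int_split[OF H1] hyp.int_split[OF H2]])
    fix y
    show "(if 0 \<le> y then (exp (-(k*\<bar>x-y\<bar>)) - exp (-(k*\<bar>x+y\<bar>))) * h1 y else 0)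
       \<le> (if 0 \<le> y then (exp (-(k*\<bar>x-y\<bar>)) - exp (-(k*\<bar>x+y\<bar>))) * h2 y else 0)"
    proof (cases "0 \<le> y")
      case True
      have "0 \<le> exp (-(k*\<bar>x-y\<bar>)) - exp (-(k*\<bar>x+y\<bar>))" using kern_pos[OF k x True] by simp
      then show ?thesis using True le[OF True] by (simp add: mult_left_mono)
    qed simp
  qed
  then show ?thesis unfolding Gr_def using k by (simp add: divide_right_mono)
qed

lemma Gr_odd_upper:
  assumes H1: "hyp k M1 h" and H2: "hyp k M2 p"
    and o1: "\<And>y. h (-y) = - h y"
    and hpos: "\<And>y. 0 \<le> y \<Longrightarrow> 0 \<le> h y"
    and le: "\<And>y. 0 \<le> y \<Longrightarrow> h y \<le> p y" and ppos: "\<And>y. 0 \<le> p y" and x: "0 \<le> x"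
  shows "Gr k h x \<le> Gr k p x"
proof -
  have k: "k > 0" using hyp.k[OF H1] .
  have "(LINT y|lborel. exp (-(k*\<bar>x-y\<bar>)) * h y)
     = (LINT y|lborel. (if 0 \<le> y then (exp (-(k*\<bar>x-y\<bar>)) - exp (-(k*\<bar>x+y\<bar>))) * h y else 0))"
    by (rule hyp.odd_split[OF H1 o1])
  also have "\<dots> \<le> (LINT y|lborel. (if 0 \<le> y then exp (-(k*\<bar>x-y\<bar>)) * p y else 0))"
  proof (rule integral_mono[OF hyp.int_split[OF H1] hyp.int_P[OF H2]])
    fix y
    show "(if 0 \<le> y then (exp (-(k*\<bar>x-y\<bar>)) - exp (-(k*\<bar>x+y\<bar>))) * h y else 0)
       \<le> (if 0 \<le> y then exp (-(k*\<bar>x-y\<bar>)) * p y else 0)"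
    proof (cases "0 \<le> y")
      case True
      have "(exp (-(k*\<bar>x-y\<bar>)) - exp (-(k*\<bar>x+y\<bar>))) * h y \<le> exp (-(k*\<bar>x-y\<bar>)) * h y"
        using hpos[OF True] by (simp add: mult_right_mono)
      also have "\<dots> \<le> exp (-(k*\<bar>x-y\<bar>)) * p y" using le[OF True] by simp
      finally show ?thesis using True by simp
    qed simp
  qed
  also have "\<dots> \<le> (LINT y|lborel. exp (-(k*\<bar>x-y\<bar>)) * p y)"
    by (rule integral_mono[OF hyp.int_P[OF H2] hyp.int_kern[OF H2]]) (auto simp: ppos)
  finally show ?thesis unfolding Gr_def using k by (simp add: divide_right_mono)
qed

lemma Gr_limit:
  assumes H: "\<And>n. hyp k M (hs n)" and H0: "hyp k M h"
    and lim: "\<And>y. (\<lambda>n. hs n y) \<longlonglongrightarrow> h y"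
  shows "(\<lambda>n. Gr k (hs n) x) \<longlonglongrightarrow> Gr k h x"
proof -
  have k: "k > 0" using hyp.k[OF H0] .
  have "(\<lambda>n. LINT y|lborel. exp (-(k*\<bar>x-y\<bar>)) * hs n y) \<longlonglongrightarrow> (LINT y|lborel. exp (-(k*\<bar>x-y\<bar>)) * h y)"
  proof (rule integral_dominated_convergence[where w="\<lambda>y. M * exp (-(k*\<bar>x-y\<bar>))"])
    show "(\<lambda>y. exp (-(k*\<bar>x-y\<bar>)) * h y) \<in> borel_measurable lborel"
      using hyp.hm[OF H0] by measurable
    show "(\<lambda>y. exp (-(k*\<bar>x-y\<bar>)) * hs n y) \<in> borel_measurable lborel" for n
      using hyp.hm[OF H] by measurable
    show "integrable lborel (\<lambda>y. M * exp (-(k*\<bar>x-y\<bar>)))"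
      using exp_abs_integrable[OF k, of x] by simp
    show "AE y in lborel. (\<lambda>n. exp (-(k*\<bar>x-y\<bar>)) * hs n y) \<longlonglongrightarrow> exp (-(k*\<bar>x-y\<bar>)) * h y"
      using lim by (auto intro!: tendsto_mult)
    show "AE y in lborel. norm (exp (-(k*\<bar>x-y\<bar>)) * hs n y) \<le> M * exp (-(k*\<bar>x-y\<bar>))" for n
      using hyp.hb[OF H] by (auto simp: abs_mult intro: mult_left_mono[of _ _ "exp _", simplified mult.commute])
  qed
  then show ?thesis unfolding Gr_def using k by (intro tendsto_divide) auto
qed


lemma exp_unbounded:
  fixes a c k :: real
  assumes a: "a > 0" and k: "k > 0" and b: "\<And>x. 0 \<le> x \<Longrightarrow> a * exp (k*x) \<le> c"
  shows False
proof -
  have c: "c \<ge> a" using b[of 0] by simp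
  define x where "x = c / (a*k)"
  have x0: "0 \<le> x" using a k c unfolding x_def by simp
  have ax: "a * (1 + k*x) = a + c" unfolding x_def using a k by (simp add: field_simps)
  have "a * (1 + k*x) \<le> a * exp (k*x)" using a by (intro mult_left_mono exp_ge_add_one_self) auto
  also have "\<dots> \<le> c" using b[OF x0] .
  finally have "a + c \<le> c" unfolding ax .
  then show False using a by simp
qed

lemma Gr_repr:
  fixes w w1 w2 :: "real \<Rightarrow> real"
  assumes k: "k > 0"
    and d1: "\<And>x. (w has_real_derivative w1 x) (at x)"
    and d2: "\<And>x. (w1 has_real_derivative w2 x) (at x)"
    and c2: "continuous_on UNIV w2"
    and bw: "\<And>x. \<bar>w x\<bar> \<le> B" and bw2: "\<And>x. \<bar>w2 x\<bar> \<le> B2"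
  shows "Gr k (\<lambda>x. k^2 * w x - w2 x) x = w x"
proof -
  define h where "h = (\<lambda>x. k^2 * w x - w2 x)"
  have cw: "continuous_on UNIV w"
    using d1 by (intro continuous_at_imp_continuous_on) (auto intro: DERIV_isCont)
  have H: "hyp k (k^2 * B + B2) h"
  proof
    show "continuous_on UNIV h" unfolding h_def by (intro continuous_intros cw c2)
    fix y
    have "\<bar>h y\<bar> \<le> k^2 * \<bar>w y\<bar> + \<bar>w2 y\<bar>" unfolding h_def
      using abs_triangle_ineq4[of "k^2 * w y" "w2 y"] by (simp add: abs_mult)
    also have "\<dots> \<le> k^2 * B + B2" by (intro add_mono mult_left_mono bw bw2) auto
    finally show "\<bar>h y\<bar> \<le> k^2 * B + B2" .
  qed (rule k)
  define v where "v = Gr k h"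
  define v1 where "v1 = Gd k h"
  define d where "d = (\<lambda>x. w x - v x)"
  define e where "e = (\<lambda>x. w1 x - v1 x)"
  have dd: "(d has_real_derivative e x) (at x)" for x
    unfolding d_def e_def v_def v1_def using d1 hyp.Gr_deriv[OF H] by (intro DERIV_diff) auto
  have de: "(e has_real_derivative k^2 * d x) (at x)" for x
  proof -
    have "(e has_real_derivative w2 x - (k^2 * v x - h x)) (at x)"
      unfolding e_def v_def v1_def using d2 hyp.Gd_deriv[OF H] by (intro DERIV_diff) auto
    moreover have "w2 x - (k^2 * v x - h x) = k^2 * d x" unfolding d_def h_def by (simp add: algebra_simps)
    ultimately show ?thesis by simp
  qed
  define Bd where "Bd = B + (k^2 * B + B2) * Ik k / k"
  have bd: "\<bar>d x\<bar> \<le> Bd" for x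
  proof -
    have "\<bar>d x\<bar> \<le> \<bar>w x\<bar> + \<bar>v x\<bar>" unfolding d_def by (rule abs_triangle_ineq4)
    also have "\<dots> \<le> Bd" unfolding Bd_def v_def by (intro add_mono bw hyp.Gr_bound[OF H])
    finally show ?thesis .
  qed
  define p where "p = (\<lambda>x. (e x - k * d x) * exp (k*x))"
  define q where "q = (\<lambda>x. (e x + k * d x) * exp (-(k*x)))"
  have pd: "(p has_real_derivative 0) (at x)" for x
    unfolding p_def using dd[of x] de[of x]
    by (auto intro!: derivative_eq_intros simp: algebra_simps power2_eq_square)
  have pc: "p x = p 0" for x using DERIV_isconst_all[of p x 0] pd by blast
  have qd: "(q has_real_derivative 0) (at x)" for x
    unfolding q_def using dd[of x] de[of x]
    by (auto intro!: derivative_eq_intros simp: algebra_simps power2_eq_square)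
  have qc: "q x = q 0" for x using DERIV_isconst_all[of q x 0] qd by blast
  have dform: "2 * k * d x = q 0 * exp (k*x) - p 0 * exp (-(k*x))" for x
  proof -
    have "q 0 * exp (k*x) = e x + k * d x" using qc[of x] unfolding q_def by (simp add: exp_minus field_simps)
    moreover have "p 0 * exp (-(k*x)) = e x - k * d x" using pc[of x] unfolding p_def by (simp add: exp_minus field_simps)
    ultimately show ?thesis by simp
  qed
  have q0: "q 0 = 0"
  proof (rule ccontr)
    assume "q 0 \<noteq> 0"
    then have a: "\<bar>q 0\<bar> > 0" by simp
    show False
    proof (rule exp_unbounded[OF a k])
      fix x :: real assume x: "0 \<le> x"
      have "\<bar>q 0\<bar> * exp (k*x) = \<bar>2 * k * d x + p 0 * exp (-(k*x))\<bar>" using dform[of x] by (simp add: abs_mult)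
      also have "\<dots> \<le> 2 * k * \<bar>d x\<bar> + \<bar>p 0\<bar> * exp (-(k*x))"
        using k by (simp add: abs_mult abs_triangle_ineq[THEN order_trans])
      also have "\<dots> \<le> 2 * k * Bd + \<bar>p 0\<bar> * 1"
        using k x bd[of x] by (intro add_mono mult_left_mono) auto
      finally show "\<bar>q 0\<bar> * exp (k*x) \<le> 2 * k * Bd + \<bar>p 0\<bar>" by simp
    qed
  qed
  have p0: "p 0 = 0"
  proof (rule ccontr)
    assume "p 0 \<noteq> 0"
    then have a: "\<bar>p 0\<bar> > 0" by simp
    show False
    proof (rule exp_unbounded[OF a k])
      fix x :: real assume x: "0 \<le> x"
      have "\<bar>p 0\<bar> * exp (k*x) = \<bar>2 * k * d (-x)\<bar>" using dform[of "-x"] q0 by (simp add: abs_mult)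
      also have "\<dots> \<le> 2 * k * Bd" using k bd[of "-x"] by (simp add: abs_mult)
      finally show "\<bar>p 0\<bar> * exp (k*x) \<le> 2 * k * Bd" .
    qed
  qed
  have "d x = 0" using dform[of x] p0 q0 k by simp
  then show ?thesis unfolding d_def v_def h_def by simp
qed


lemma CV:
  fixes d d1 d2 :: "real \<Rightarrow> real"
  assumes dd: "\<And>x. (d has_real_derivative d1 x) (at x)"
    and dd1: "\<And>x. (d1 has_real_derivative d2 x) (at x)"
    and pos: "\<And>x. X \<le> x \<Longrightarrow> 0 \<le> d x" and bnd: "\<And>x. X \<le> x \<Longrightarrow> d x \<le> B"
    and conv: "\<And>x. X \<le> x \<Longrightarrow> c * d x \<le> d2 x" and c: "c > 0"
  shows "(d \<longlongrightarrow> 0) at_top" and "(d1 \<longlongrightarrow> 0) at_top"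
proof -
  have d2pos: "X \<le> x \<Longrightarrow> 0 \<le> d2 x" for x using conv[of x] pos[of x] c
    by (smt (verit) mult_nonneg_nonneg)
  have mono1: "d1 s \<le> d1 t" if "X \<le> s" "s \<le> t" for s t
    using DERIV_nonneg_imp_nondecreasing[of s t d1] that dd1 d2pos by force
  have neg1: "d1 x \<le> 0" if x: "X \<le> x" for x
  proof (rule ccontr)
    assume "\<not> d1 x \<le> 0"
    then have p: "d1 x > 0" by simp
    define t where "t = x + (\<bar>B\<bar> + 1) / d1 x"
    have xt: "x < t" unfolding t_def using p by (simp add: add_pos_nonneg)
    obtain z where z: "x < z" "z < t" "d t - d x = (t - x) * d1 z"
      using MVT2[OF xt dd] by blast
    have "d1 x \<le> d1 z" using mono1[of x z] x z by simp
    then have "(t - x) * d1 x \<le> (t - x) * d1 z" using xt by (simp add: mult_left_mono)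
    moreover have "(t - x) * d1 x = \<bar>B\<bar> + 1" unfolding t_def using p by simp
    moreover have "0 \<le> d x" using pos[OF x] .
    moreover have "d t \<le> B" using bnd[of t] x xt by simp
    ultimately show False using z(3) by linarith
  qed
  have anti: "d t \<le> d s" if "X \<le> s" "s \<le> t" for s t
    using DERIV_nonpos_imp_nonincreasing[of s t d] that dd neg1 by force
  show "(d \<longlongrightarrow> 0) at_top"
  proof (rule tendstoI)
    fix e :: real assume e: "e > 0"
    have "\<exists>x0\<ge>X. d x0 < e"
    proof (rule ccontr)
      assume "\<not> (\<exists>x0\<ge>X. d x0 < e)"
      then have ge: "X \<le> x \<Longrightarrow> e \<le> d x" for x by force
      define t where "t = X + (\<bar>d1 X\<bar> + 1) / (c * e)"
      have Xt: "X < t" unfolding t_def using e c by (simp add: add_pos_nonneg)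
      obtain z where z: "X < z" "z < t" "d1 t - d1 X = (t - X) * d2 z"
        using MVT2[OF Xt dd1] by blast
      have "c * e \<le> d2 z" using conv[of z] ge[of z] z c by (smt (verit) mult_left_mono)
      then have "(t - X) * (c * e) \<le> (t - X) * d2 z" using Xt by (simp add: mult_left_mono)
      moreover have "(t - X) * (c * e) = \<bar>d1 X\<bar> + 1" unfolding t_def using e c by simp
      moreover have "d1 t \<le> 0" using neg1[of t] Xt by simp
      ultimately show False using z(3) by linarith
    qed
    then obtain x0 where x0: "X \<le> x0" "d x0 < e" by blast
    show "eventually (\<lambda>x. dist (d x) 0 < e) at_top"
      unfolding eventually_at_top_linorder
    proof (intro exI allI impI)
      fix x assume "x0 \<le> x"
      then have "0 \<le> d x" "d x \<le> d x0" using pos[of x] anti[of x0 x] x0 by auto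
      then show "dist (d x) 0 < e" using x0 by simp
    qed
  qed
  show "(d1 \<longlongrightarrow> 0) at_top"
  proof (rule tendstoI)
    fix e :: real assume e: "e > 0"
    have "\<exists>x0\<ge>X. d1 x0 > - e"
    proof (rule ccontr)
      assume "\<not> (\<exists>x0\<ge>X. d1 x0 > - e)"
      then have le: "X \<le> x \<Longrightarrow> d1 x \<le> - e" for x by force
      define t where "t = X + (\<bar>d X\<bar> + 1) / e"
      have Xt: "X < t" unfolding t_def using e by (simp add: add_pos_nonneg)
      obtain z where z: "X < z" "z < t" "d t - d X = (t - X) * d1 z"
        using MVT2[OF Xt dd] by blast
      have "(t - X) * d1 z \<le> (t - X) * (- e)" using le[of z] z Xt by (intro mult_left_mono) auto
      moreover have "(t - X) * e = \<bar>d X\<bar> + 1" unfolding t_def using e by simp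
      moreover have "0 \<le> d t" using pos[of t] Xt by simp
      moreover have "(t - X) * (- e) = - ((t - X) * e)" by simp
      moreover have "d X \<le> \<bar>d X\<bar>" by simp
      ultimately show False using z(3) by linarith
    qed
    then obtain x0 where x0: "X \<le> x0" "d1 x0 > - e" by blast
    show "eventually (\<lambda>x. dist (d1 x) 0 < e) at_top"
      unfolding eventually_at_top_linorder
    proof (intro exI allI impI)
      fix x assume "x0 \<le> x"
      then have "d1 x \<le> 0" "d1 x0 \<le> d1 x" using neg1[of x] mono1[of x0 x] x0 by auto
      then show "dist (d1 x) 0 < e" using x0 by (simp add: dist_real_def)
    qed
  qed
qed


lemma rho_sq:
  assumes lam: "lam > 0"
  shows "(rho g lam)^2 = (sqrt (g^2 + 4*lam) - g) / 2"
    and "sqrt (g^2 + 4*lam) > \<bar>g\<bar>"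
proof -
  have "sqrt (g^2 + 4*lam) > sqrt (g^2)" using lam by (intro real_sqrt_less_mono) simp
  then show s: "sqrt (g^2 + 4*lam) > \<bar>g\<bar>" by simp
  then have "sqrt (g^2 + 4*lam) - g \<ge> 0" by simp
  then show "(rho g lam)^2 = (sqrt (g^2 + 4*lam) - g) / 2"
    unfolding rho_def by (simp add: power_divide)
qed

lemma rho_props:
  assumes lam: "lam > 0"
  shows "rho g lam > 0" "(rho g lam)^4 + g * (rho g lam)^2 = lam" "(rho g lam)^2 + g > 0"
proof -
  define s where "s = sqrt (g^2 + 4*lam)"
  have sq: "(rho g lam)^2 = (s - g)/2" and sg: "s > \<bar>g\<bar>" using rho_sq[OF lam, of g] s_def by auto
  have s2: "s^2 = g^2 + 4*lam" unfolding s_def using lam by (simp add: add_nonneg_pos)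
  have p2: "(rho g lam)^2 > 0" unfolding sq using sg by simp
  have "0 \<le> sqrt (g^2 + 4*lam) - g" using sg s_def by simp
  then have "rho g lam \<ge> 0" unfolding rho_def by simp
  moreover have "rho g lam \<noteq> 0" using p2 by auto
  ultimately show "rho g lam > 0" by simp
  have "(rho g lam)^4 = ((rho g lam)^2)^2" by simp
  then show "(rho g lam)^4 + g * (rho g lam)^2 = lam" unfolding sq
    using s2 by (simp add: power2_eq_square algebra_simps field_simps)
  have "- g < s" using sg abs_ge_minus_self[of g] by linarith
  then show "(rho g lam)^2 + g > 0" unfolding sq by (simp add: field_simps)
qed

lemma rho_mono:
  assumes "0 < lam" "lam \<le> lam'"
  shows "rho g lam \<le> rho g lam'"
  unfolding rho_def using assms by (intro divide_right_mono real_sqrt_le_mono diff_right_mono) auto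

locale prob =
  fixes L g om :: real and V :: "real \<Rightarrow> real"
  assumes L_pos: "L > 0" and V_cont: "continuous_on UNIV V"
    and V_per: "\<And>x. V (x + L) = V x" and V_even: "\<And>x. V (- x) = V x"
    and omega: "om > - Inf (range V)"
begin

lemma V_per_nat: "V (x + real n * L) = V x"
proof (induction n arbitrary: x)
  case (Suc n)
  have "V (x + real (Suc n) * L) = V ((x + real n * L) + L)" by (simp add: algebra_simps)
  also have "\<dots> = V x" using V_per Suc by simp
  finally show ?case .
qed simp

lemma V_per_int: "V (x + real_of_int m * L) = V x"
proof (cases "m \<ge> 0")
  case True
  then obtain n where "m = int n" using nonneg_int_cases by blast
  then show ?thesis using V_per_nat by simp
next
  case False
  define n where "n = nat (- m)"
  have m: "m = - int n" unfolding n_def using False by simp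
  have "V (x + real_of_int m * L) = V ((x + real_of_int m * L) + real n * L)" using V_per_nat by simp
  also have "\<dots> = V x" using m by simp
  finally show ?thesis .
qed

lemma V_red: "\<exists>y\<in>{0..L}. V x = V y"
proof -
  define m where "m = \<lfloor>x / L\<rfloor>"
  define y where "y = x + real_of_int (- m) * L"
  have "real_of_int m \<le> x / L" "x / L < real_of_int m + 1" unfolding m_def by linarith+
  then have "real_of_int m * L \<le> x" "x < (real_of_int m + 1) * L"
    using L_pos by (simp_all add: field_simps)
  then have "y \<in> {0..L}" unfolding y_def by (auto simp: algebra_simps)
  moreover have "V y = V x" unfolding y_def by (rule V_per_int)
  ultimately show ?thesis by (intro bexI[of _ y]) auto
qed

lemma range_V: "range V = V ` {0..L}"
  using V_red by auto

lemma V_compact: "compact (range V)"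
  unfolding range_V by (rule compact_continuous_image) (auto intro: continuous_on_subset[OF V_cont])

definition "Vmin = Inf (range V)"
definition "Vmax = Sup (range V)"
definition "lam1 = om + Vmin"
definition "lam2 = om + Vmax"
definition "r1 = rho g lam1"
definition "r2 = rho g lam2"

lemma V_bounds: "Vmin \<le> V x" "V x \<le> Vmax"
proof -
  have b: "bounded (range V)" using V_compact by (rule compact_imp_bounded)
  show "Vmin \<le> V x" unfolding Vmin_def by (rule cInf_lower) (use b bounded_imp_bdd_below in auto)
  show "V x \<le> Vmax" unfolding Vmax_def by (rule cSup_upper) (use b bounded_imp_bdd_above in auto)
qed

lemma Vmax_att: "\<exists>xs\<in>{0..L}. V xs = Vmax"
proof -
  have b: "bdd_above (range V)" by (rule bounded_imp_bdd_above[OF compact_imp_bounded[OF V_compact]])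
  have c: "closed (range V)" using compact_imp_closed[OF V_compact] .
  have "Vmax \<in> range V" unfolding Vmax_def using closed_contains_Sup[OF _ b c] by auto
  then show ?thesis unfolding range_V by auto
qed

lemma lam1_pos: "lam1 > 0" using omega unfolding lam1_def Vmin_def by simp
lemma lam12: "lam1 \<le> lam2" unfolding lam1_def lam2_def using V_bounds[of 0] by simp
lemma lam2_pos: "lam2 > 0" using lam1_pos lam12 by simp
lemma Vt_bounds: "lam1 \<le> om + V x" "om + V x \<le> lam2"
  unfolding lam1_def lam2_def using V_bounds[of x] by auto

lemma r1_pos: "r1 > 0" unfolding r1_def using rho_props(1)[OF lam1_pos] .
lemma r12: "r1 \<le> r2" unfolding r1_def r2_def using rho_mono[OF lam1_pos lam12] .
lemma r2_pos: "r2 > 0" using r1_pos r12 by simp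
lemma r1_id: "r1^4 + g * r1^2 = lam1" unfolding r1_def using rho_props(2)[OF lam1_pos] .
lemma r2_id: "r2^4 + g * r2^2 = lam2" unfolding r2_def using rho_props(2)[OF lam2_pos] .
lemma r1_g: "r1^2 + g > 0" unfolding r1_def using rho_props(3)[OF lam1_pos] .

end


context prob begin

definition "fN x u = (om + V x) * u - g * u^3 - u^5"
definition "Kc = 1 + 3 * \<bar>g\<bar> * r2^2 + 5 * r2^4"
definition "kk = sqrt Kc"
definition "FF x u = Kc * u + fN x u"
definition "MF = Kc * r2 + lam2 * r2 + \<bar>g\<bar> * r2^3 + r2^5"

lemma Kc_pos: "Kc > 0" unfolding Kc_def by (simp add: add_pos_nonneg)
lemma kk_pos: "kk > 0" unfolding kk_def using Kc_pos by simp
lemma kk_sq: "kk^2 = Kc" unfolding kk_def using Kc_pos by simp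

lemma FF_deriv: "((\<lambda>u. FF x u) has_real_derivative Kc + (om + V x) - 3 * g * u^2 - 5 * u^4) (at u)"
  unfolding FF_def fN_def by (auto intro!: derivative_eq_intros simp: algebra_simps)

lemma FF_deriv_nonneg:
  assumes "\<bar>u\<bar> \<le> r2" shows "0 \<le> Kc + (om + V x) - 3 * g * u^2 - 5 * u^4"
proof -
  have "\<bar>u\<bar> \<le> \<bar>r2\<bar>" using assms r2_pos by simp
  then have u2: "u^2 \<le> r2^2" by (simp add: abs_le_square_iff)
  have "3 * g * u^2 \<le> 3 * \<bar>g\<bar> * u^2" by (simp add: mult_right_mono)
  also have "\<dots> \<le> 3 * \<bar>g\<bar> * r2^2" using u2 by (simp add: mult_left_mono)
  finally have a: "3 * g * u^2 \<le> 3 * \<bar>g\<bar> * r2^2" .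
  have "u^4 = (u^2)^2" by simp
  also have "\<dots> \<le> (r2^2)^2" by (rule power_mono[OF u2]) simp
  finally have b: "u^4 \<le> r2^4" by simp
  have "0 < om + V x" using Vt_bounds[of x] lam1_pos by simp
  then show ?thesis using a b unfolding Kc_def by simp
qed

lemma FF_mono:
  assumes "- r2 \<le> u" "u \<le> v" "v \<le> r2" shows "FF x u \<le> FF x v"
proof -
  have "\<And>z. u \<le> z \<Longrightarrow> z \<le> v \<Longrightarrow> \<exists>y. ((\<lambda>u. FF x u) has_real_derivative y) (at z) \<and> 0 \<le> y"
  proof -
    fix z assume "u \<le> z" "z \<le> v"
    then have "\<bar>z\<bar> \<le> r2" using assms by auto
    then show "\<exists>y. ((\<lambda>u. FF x u) has_real_derivative y) (at z) \<and> 0 \<le> y"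
      using FF_deriv FF_deriv_nonneg by blast
  qed
  then show ?thesis using DERIV_nonneg_imp_nondecreasing[OF assms(2), of "\<lambda>u. FF x u"] by blast
qed

lemma FF_0: "FF x 0 = 0" unfolding FF_def fN_def by simp

lemma FF_nonneg: "0 \<le> u \<Longrightarrow> u \<le> r2 \<Longrightarrow> 0 \<le> FF x u"
  using FF_mono[of 0 u x] FF_0 r2_pos by simp

lemma FF_odd: "FF (- x) (- u) = - FF x u"
  unfolding FF_def fN_def using V_even by simp

lemma FF_even_x: "FF (- x) u = FF x u"
  unfolding FF_def fN_def using V_even by simp

lemma FF_per: "FF (x + L) u = FF x u"
  unfolding FF_def fN_def using V_per by simp

lemma f_r1: "0 \<le> fN x r1"
proof -
  have "fN x r1 = r1 * ((om + V x) - (r1^4 + g * r1^2))" unfolding fN_def by (simp add: algebra_simps power_def)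
  also have "\<dots> = r1 * ((om + V x) - lam1)" using r1_id by simp
  finally show ?thesis using r1_pos Vt_bounds[of x] by simp
qed

lemma f_r2: "fN x r2 \<le> 0"
proof -
  have "fN x r2 = r2 * ((om + V x) - (r2^4 + g * r2^2))" unfolding fN_def by (simp add: algebra_simps power_def)
  also have "\<dots> = r2 * ((om + V x) - lam2)" using r2_id by simp
  finally show ?thesis using r2_pos Vt_bounds[of x] by (simp add: mult_nonneg_nonpos)
qed

lemma FF_bound:
  assumes u: "\<bar>u\<bar> \<le> r2" shows "\<bar>FF x u\<bar> \<le> MF"
proof -
  have vt: "\<bar>om + V x\<bar> \<le> lam2" using Vt_bounds[of x] lam1_pos by simp
  have "\<bar>FF x u\<bar> \<le> Kc * \<bar>u\<bar> + \<bar>om + V x\<bar> * \<bar>u\<bar> + \<bar>g\<bar> * \<bar>u\<bar>^3 + \<bar>u\<bar>^5"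
  proof -
    have tri: "\<bar>A + (B - C - D)\<bar> \<le> \<bar>A\<bar> + \<bar>B\<bar> + \<bar>C\<bar> + \<bar>D\<bar>" for A B C D :: real by arith
    show ?thesis unfolding FF_def fN_def
      using tri[of "Kc * u" "(om + V x) * u" "g * u^3" "u^5"] Kc_pos by (simp add: abs_mult power_abs)
  qed
  also have "\<dots> \<le> Kc * r2 + lam2 * r2 + \<bar>g\<bar> * r2^3 + r2^5"
    using u Kc_pos vt
    by (intro add_mono mult_mono mult_left_mono power_mono) auto
  finally show ?thesis unfolding MF_def .
qed

lemma FF_cont: "continuous_on UNIV u \<Longrightarrow> continuous_on UNIV (\<lambda>x. FF x (u x))"
  unfolding FF_def fN_def by (intro continuous_intros V_cont)

lemma hypF:
  assumes "continuous_on UNIV u" "\<And>x. \<bar>u x\<bar> \<le> r2"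
  shows "hyp kk MF (\<lambda>x. FF x (u x))"
  using kk_pos FF_cont[OF assms(1)] FF_bound assms(2) by unfold_locales auto

lemma Gr_const: "Gr kk (\<lambda>x. Kc * c) x = c"
proof -
  have "Gr kk (\<lambda>x. kk^2 * c - 0) x = c"
    by (rule Gr_repr[where ?w1.0="\<lambda>x. 0" and B="\<bar>c\<bar>" and ?B2.0=0]) (auto simp: kk_pos)
  then show ?thesis by (simp add: kk_sq)
qed

end


lemma Ik_nonneg: "0 \<le> Ik k" unfolding Ik_def by (rule integral_nonneg_AE) auto

context prob begin

lemma MF_nonneg: "0 \<le> MF" using FF_bound[of 0 0] r2_pos by simp

lemma lim_fix:
  assumes it: "\<And>n. us (Suc n) = Gr kk (\<lambda>x. FF x (us n x))"
    and cont: "\<And>n. continuous_on UNIV (us n)"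
    and bd: "\<And>n x. \<bar>us n x\<bar> \<le> r2"
    and lim: "\<And>x. (\<lambda>n. us n x) \<longlonglongrightarrow> \<phi> x"
  shows "continuous_on UNIV \<phi>" "\<And>x. \<bar>\<phi> x\<bar> \<le> r2" "\<And>x. \<phi> x = Gr kk (\<lambda>x. FF x (\<phi> x)) x"
proof -
  define C where "C = MF * Ik kk"
  have C0: "0 \<le> C" unfolding C_def using MF_nonneg Ik_nonneg by simp
  have lip: "\<bar>us (Suc n) x - us (Suc n) y\<bar> \<le> C * \<bar>x - y\<bar>" for n x y
    unfolding it C_def using hyp.Gr_lip[OF hypF[OF cont bd]] .
  have lipphi: "\<bar>\<phi> x - \<phi> y\<bar> \<le> C * \<bar>x - y\<bar>" for x y
  proof (rule LIMSEQ_le_const2)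
    show "(\<lambda>n. \<bar>us (Suc n) x - us (Suc n) y\<bar>) \<longlonglongrightarrow> \<bar>\<phi> x - \<phi> y\<bar>"
      using lim[of x, THEN LIMSEQ_Suc] lim[of y, THEN LIMSEQ_Suc] by (intro tendsto_intros)
  qed (use lip in auto)
  show c: "continuous_on UNIV \<phi>"
  proof (rule lipschitz_on_continuous_on)
    show "C-lipschitz_on UNIV \<phi>"
      by (rule lipschitz_onI) (use lipphi C0 in \<open>auto simp: dist_real_def\<close>)
  qed
  show b: "\<bar>\<phi> x\<bar> \<le> r2" for x
    by (rule LIMSEQ_le_const2[OF tendsto_rabs[OF lim[of x]]]) (use bd in auto)
  show "\<phi> x = Gr kk (\<lambda>x. FF x (\<phi> x)) x" for x
  proof (rule LIMSEQ_unique)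
    show "(\<lambda>n. us (Suc n) x) \<longlonglongrightarrow> \<phi> x" using lim[of x] by (rule LIMSEQ_Suc)
    have "(\<lambda>n. Gr kk (\<lambda>x. FF x (us n x)) x) \<longlonglongrightarrow> Gr kk (\<lambda>x. FF x (\<phi> x)) x"
    proof (rule Gr_limit)
      show "hyp kk MF (\<lambda>x. FF x (us n x))" for n by (rule hypF[OF cont bd])
      show "hyp kk MF (\<lambda>x. FF x (\<phi> x))" by (rule hypF[OF c b])
      show "(\<lambda>n. FF y (us n y)) \<longlonglongrightarrow> FF y (\<phi> y)" for y
        unfolding FF_def fN_def using lim[of y] by (intro tendsto_intros)
    qed
    then show "(\<lambda>n. us (Suc n) x) \<longlonglongrightarrow> Gr kk (\<lambda>x. FF x (\<phi> x)) x" using it by simp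
  qed
qed

lemma sol:
  assumes c: "continuous_on UNIV \<phi>" and b: "\<And>x. \<bar>\<phi> x\<bar> \<le> r2"
    and fx: "\<And>x. \<phi> x = Gr kk (\<lambda>x. FF x (\<phi> x)) x"
  shows "(\<phi> has_real_derivative Gd kk (\<lambda>x. FF x (\<phi> x)) x) (at x)"
    and "(Gd kk (\<lambda>x. FF x (\<phi> x)) has_real_derivative (- fN x (\<phi> x))) (at x)"
    and "is_solution (\<lambda>x. om + V x) g \<phi>"
proof -
  let ?h = "\<lambda>x. FF x (\<phi> x)"
  have H: "hyp kk MF ?h" by (rule hypF[OF c b])
  have eq: "\<phi> = Gr kk ?h" by (rule ext) (rule fx)
  show d1: "(\<phi> has_real_derivative Gd kk ?h x) (at x)" for x
    using hyp.Gr_deriv[OF H, of x] by (simp only: eq[symmetric])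
  show d2: "(Gd kk ?h has_real_derivative (- fN x (\<phi> x))) (at x)" for x
  proof -
    have "(Gd kk ?h has_real_derivative (kk^2 * Gr kk ?h x - ?h x)) (at x)" by (rule hyp.Gd_deriv[OF H])
    moreover have "kk^2 * Gr kk ?h x - ?h x = - fN x (\<phi> x)"
    proof -
      have "kk^2 * Gr kk ?h x - ?h x = Kc * \<phi> x - FF x (\<phi> x)"
        by (simp only: kk_sq fx[of x, symmetric])
      then show ?thesis by (simp add: FF_def)
    qed
    ultimately show ?thesis by simp
  qed
  show "is_solution (\<lambda>x. om + V x) g \<phi>"
    unfolding is_solution_def
  proof (intro exI conjI allI)
    show "(\<phi> has_real_derivative Gd kk ?h x) (at x)" for x by (rule d1)
    show "(Gd kk ?h has_real_derivative (- fN x (\<phi> x))) (at x)" for x by (rule d2)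
    show "- fN x (\<phi> x) + (om + V x) * \<phi> x - g * \<phi> x ^ 3 - \<phi> x ^ 5 = 0" for x
      unfolding fN_def by simp
  qed
qed

end


lemma (in hyp) Gr_cont: "continuous_on UNIV (Gr k h)"
  by (intro continuous_at_imp_continuous_on ballI DERIV_isCont[OF Gr_deriv])

context prob begin

definition "InvP u \<longleftrightarrow> continuous_on UNIV u \<and> (\<forall>x. r1 \<le> u x \<and> u x \<le> r2)
   \<and> (\<forall>x. u (x + L) = u x) \<and> (\<forall>x. u (- x) = u x)"

lemma hyp_const: "hyp kk \<bar>c\<bar> (\<lambda>x. c)"
  by unfold_locales (auto simp: kk_pos)

lemma InvP_bd: "InvP u \<Longrightarrow> \<bar>u x\<bar> \<le> r2"
  unfolding InvP_def using r1_pos by (smt (verit))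

lemma stepP:
  assumes I: "InvP u"
  shows "continuous_on UNIV (Gr kk (\<lambda>x. FF x (u x)))"
    and "r1 \<le> Gr kk (\<lambda>x. FF x (u x)) x"
    and "Gr kk (\<lambda>x. FF x (u x)) (x + L) = Gr kk (\<lambda>x. FF x (u x)) x"
    and "Gr kk (\<lambda>x. FF x (u x)) (- x) = Gr kk (\<lambda>x. FF x (u x)) x"
proof -
  have c: "continuous_on UNIV u" using I unfolding InvP_def by simp
  have H: "hyp kk MF (\<lambda>x. FF x (u x))" by (rule hypF[OF c InvP_bd[OF I]])
  show "continuous_on UNIV (Gr kk (\<lambda>x. FF x (u x)))" by (rule hyp.Gr_cont[OF H])
  have "Gr kk (\<lambda>x. Kc * r1) x \<le> Gr kk (\<lambda>x. FF x (u x)) x"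
  proof (rule Gr_mono[OF hyp_const H])
    fix y
    have "Kc * r1 \<le> FF y r1" unfolding FF_def using f_r1[of y] by simp
    also have "\<dots> \<le> FF y (u y)" using I r1_pos unfolding InvP_def by (intro FF_mono) auto
    finally show "Kc * r1 \<le> FF y (u y)" .
  qed
  then show "r1 \<le> Gr kk (\<lambda>x. FF x (u x)) x" using Gr_const by simp
  show "Gr kk (\<lambda>x. FF x (u x)) (x + L) = Gr kk (\<lambda>x. FF x (u x)) x"
    by (rule Gr_shift) (use I in \<open>simp add: InvP_def FF_per\<close>)
  have "(\<lambda>y. FF (- y) (u (- y))) = (\<lambda>y. FF y (u y))"
    using I by (auto simp: InvP_def FF_even_x)
  then show "Gr kk (\<lambda>x. FF x (u x)) (- x) = Gr kk (\<lambda>x. FF x (u x)) x"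
    using Gr_reflect[of kk "\<lambda>x. FF x (u x)" x] by simp
qed

primrec up :: "nat \<Rightarrow> real \<Rightarrow> real" where
  "up 0 = (\<lambda>x. r2)"
| "up (Suc n) = Gr kk (\<lambda>x. FF x (up n x))"

lemma up_props: "InvP (up n) \<and> (\<forall>x. up (Suc n) x \<le> up n x)"
proof (induction n)
  case 0
  have I: "InvP (up 0)" unfolding InvP_def using r12 by auto
  have "Gr kk (\<lambda>x. FF x r2) x \<le> Gr kk (\<lambda>x. Kc * r2) x" for x
  proof (rule Gr_mono[OF hypF hyp_const])
    show "continuous_on UNIV (\<lambda>x. r2)" by simp
    show "\<bar>r2\<bar> \<le> r2" for x :: real using r2_pos by simp
    show "FF y r2 \<le> Kc * r2" for y unfolding FF_def using f_r2[of y] by simp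
  qed
  then show ?case using I Gr_const by simp
next
  case (Suc n)
  then have I: "InvP (up n)" and dec: "\<And>x. up (Suc n) x \<le> up n x" by auto
  have ub: "up (Suc n) x \<le> r2" for x
  proof -
    have "up n x \<le> r2" using I unfolding InvP_def by simp
    then show ?thesis using dec[of x] by linarith
  qed
  have I2: "InvP (up (Suc n))"
    unfolding InvP_def using stepP[OF I] ub by simp
  have "Gr kk (\<lambda>x. FF x (up (Suc n) x)) x \<le> Gr kk (\<lambda>x. FF x (up n x)) x" for x
  proof (rule Gr_mono[OF hypF hypF])
    show "continuous_on UNIV (up (Suc n))" using I2 unfolding InvP_def by simp
    show "continuous_on UNIV (up n)" using I unfolding InvP_def by simp
    show "\<bar>up (Suc n) x\<bar> \<le> r2" for x using InvP_bd[OF I2] .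
    show "\<bar>up n x\<bar> \<le> r2" for x using InvP_bd[OF I] .
    show "FF y (up (Suc n) y) \<le> FF y (up n y)" for y
      using dec[of y] InvP_bd[OF I2, of y] InvP_bd[OF I, of y] by (intro FF_mono) auto
  qed
  then show ?case using I2 by simp
qed

lemma periodic_exists:
  "\<exists>\<phi>p. continuous_on UNIV \<phi>p \<and> (\<forall>x. r1 \<le> \<phi>p x \<and> \<phi>p x \<le> r2) \<and> (\<forall>x. \<phi>p (x + L) = \<phi>p x)
     \<and> (\<forall>x. \<phi>p (- x) = \<phi>p x) \<and> (\<forall>x. \<phi>p x = Gr kk (\<lambda>x. FF x (\<phi>p x)) x)"
proof -
  define \<phi>p where "\<phi>p x = (INF n. up n x)" for x
  have lim: "(\<lambda>n. up n x) \<longlonglongrightarrow> \<phi>p x" for x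
    unfolding \<phi>p_def
  proof (rule LIMSEQ_decseq_INF)
    show "bdd_below (range (\<lambda>n. up n x))"
      using up_props unfolding InvP_def by (auto intro!: bdd_belowI[of _ r1])
    show "decseq (\<lambda>n. up n x)"
      using up_props by (intro decseq_SucI) auto
  qed
  have it: "\<And>n. up (Suc n) = Gr kk (\<lambda>x. FF x (up n x))" by simp
  have ct: "\<And>n. continuous_on UNIV (up n)" using up_props unfolding InvP_def by blast
  have bd: "\<And>n x. \<bar>up n x\<bar> \<le> r2" using up_props InvP_bd by blast
  note F = lim_fix[OF it ct bd lim]
  have lo: "r1 \<le> \<phi>p x" for x
    by (rule LIMSEQ_le_const[OF lim]) (use up_props InvP_def in auto)
  have per: "\<phi>p (x + L) = \<phi>p x" for x
  proof (rule LIMSEQ_unique[OF lim])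
    show "(\<lambda>n. up n (x + L)) \<longlonglongrightarrow> \<phi>p x" using lim[of x] up_props unfolding InvP_def by simp
  qed
  have ev: "\<phi>p (- x) = \<phi>p x" for x
  proof (rule LIMSEQ_unique[OF lim])
    show "(\<lambda>n. up n (- x)) \<longlonglongrightarrow> \<phi>p x" using lim[of x] up_props unfolding InvP_def by simp
  qed
  show ?thesis
  proof (intro exI[of _ \<phi>p] conjI allI)
    show "continuous_on UNIV \<phi>p" by (rule F(1))
    show "\<phi>p x = Gr kk (\<lambda>x. FF x (\<phi>p x)) x" for x by (rule F(3))
    show "r1 \<le> \<phi>p x" for x by (rule lo)
    show "\<phi>p x \<le> r2" for x using F(2)[of x] by linarith
    show "\<phi>p (x + L) = \<phi>p x" for x by (rule per)
    show "\<phi>p (- x) = \<phi>p x" for x by (rule ev)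
  qed
qed

end


context prob begin

definition "aa = r1 * sqrt ((r1^2 + g) / 2)"
definition "ws x = r1 * tanh (aa * x)"
definition "ws1 x = r1 * aa * (1 - tanh (aa * x)^2)"
definition "ws2 x = - 2 * aa^2 * r1 * tanh (aa * x) * (1 - tanh (aa * x)^2)"

lemma aa_pos: "aa > 0" unfolding aa_def using r1_pos r1_g by simp
lemma aa_sq: "aa^2 = r1^2 * ((r1^2 + g) / 2)"
  unfolding aa_def using r1_g by (simp add: power_mult_distrib)

lemma ws_d1: "(ws has_real_derivative ws1 x) (at x)"
  unfolding ws_def[abs_def] ws1_def by (auto intro!: derivative_eq_intros)

lemma ws1_d2: "(ws1 has_real_derivative ws2 x) (at x)"
  unfolding ws1_def[abs_def] ws2_def by (auto intro!: derivative_eq_intros simp: power2_eq_square algebra_simps)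

lemma ws2_cont: "continuous_on UNIV ws2"
  unfolding ws2_def by (intro continuous_intros) auto

lemma ws_cont: "continuous_on UNIV ws"
  unfolding ws_def by (intro continuous_intros) auto

lemma tanh_abs1: "\<bar>tanh (z::real)\<bar> \<le> 1" using tanh_real_bounds[of z] by auto

lemma ws_bound: "\<bar>ws x\<bar> \<le> r1"
  unfolding ws_def using r1_pos tanh_abs1[of "aa*x"] by (simp add: abs_mult mult_left_le)

lemma ws2_bound: "\<bar>ws2 x\<bar> \<le> 2 * aa^2 * r1"
proof -
  have t: "\<bar>tanh (aa*x)\<bar> \<le> 1" by (rule tanh_abs1)
  have "tanh (aa*x)^2 \<le> 1" using t by (simp add: abs_le_square_iff[symmetric] abs_square_le_1)
  then have u: "\<bar>1 - tanh (aa*x)^2\<bar> \<le> 1" by simp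
  have "\<bar>tanh (aa*x) * (1 - tanh (aa*x)^2)\<bar> \<le> 1"
    using t u by (simp add: abs_mult mult_le_one)
  then show ?thesis unfolding ws2_def using r1_pos aa_pos
    by (simp add: abs_mult mult.assoc mult_left_le)
qed

lemma ws_odd: "ws (- x) = - ws x" unfolding ws_def by simp
lemma ws2_odd: "ws2 (- x) = - ws2 x" unfolding ws2_def by simp

lemma ws_nonneg: "0 \<le> x \<Longrightarrow> 0 \<le> ws x"
  unfolding ws_def using r1_pos aa_pos by simp

lemma ws_le: "ws x \<le> r1"
  using ws_bound[of x] by simp

lemma ws_sub:
  assumes y: "0 \<le> y" shows "- ws2 y \<le> fN y (ws y)"
proof -
  define t where "t = tanh (aa * y)"
  define W where "W = ws y"
  have W: "W = r1 * t" unfolding W_def ws_def t_def ..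
  have t0: "0 \<le> t" unfolding t_def using aa_pos y by simp
  have t1: "t \<le> 1" unfolding t_def using tanh_abs1[of "aa*y"] by simp
  have W0: "0 \<le> W" unfolding W using t0 r1_pos by simp
  have Wr: "W^2 \<le> r1^2" unfolding W using t0 t1 r1_pos by (simp add: power_mult_distrib power_le_one mult_left_le)
  have "lam1 * W - g * W^3 - W^5 \<le> fN y W"
    unfolding fN_def using Vt_bounds(1)[of y] W0 by (simp add: mult_right_mono)
  moreover have "lam1 * W - g * W^3 - W^5 = W * (r1^2 - W^2) * (r1^2 + W^2 + g)"
    unfolding r1_id[symmetric] by (simp add: algebra_simps power_def)
  moreover have "W * (r1^2 - W^2) * (r1^2 + g) \<le> W * (r1^2 - W^2) * (r1^2 + W^2 + g)"
    using W0 Wr by (intro mult_left_mono) auto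
  moreover have "W * (r1^2 - W^2) * (r1^2 + g) = - ws2 y"
  proof -
    have "- ws2 y = 2 * aa^2 * r1 * t * (1 - t^2)" unfolding ws2_def t_def by simp
    also have "\<dots> = r1^2 * (r1^2 + g) * r1 * t * (1 - t^2)" unfolding aa_sq by simp
    also have "\<dots> = W * (r1^2 - W^2) * (r1^2 + g)" unfolding W by (simp add: algebra_simps power2_eq_square)
    finally show ?thesis by simp
  qed
  ultimately show ?thesis unfolding W_def by linarith
qed

primrec uo :: "nat \<Rightarrow> real \<Rightarrow> real" where
  "uo 0 = ws"
| "uo (Suc n) = Gr kk (\<lambda>x. FF x (uo n x))"

end


lemma Gr_neg: "Gr k (\<lambda>y. - h y) x = - Gr k h x"
  unfolding Gr_def by (simp add: Bochner_Integration.integral_minus)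

locale prob2 = prob +
  fixes pp :: "real \<Rightarrow> real"
  assumes pp_cont: "continuous_on UNIV pp"
    and pp_lo: "\<And>x. r1 \<le> pp x" and pp_hi: "\<And>x. pp x \<le> r2"
    and pp_fix: "\<And>x. pp x = Gr kk (\<lambda>x. FF x (pp x)) x"
    and pp_even: "\<And>x. pp (- x) = pp x"
begin

definition "InvO u \<longleftrightarrow> continuous_on UNIV u \<and> (\<forall>x. u (- x) = - u x)
   \<and> (\<forall>x\<ge>0. ws x \<le> u x \<and> u x \<le> pp x)"

lemma InvO_bd: assumes "InvO u" shows "\<bar>u x\<bar> \<le> r2"
proof (cases "0 \<le> x")
  case True
  then show ?thesis using assms ws_nonneg[OF True] pp_hi[of x] unfolding InvO_def by auto
next
  case False
  then have "0 \<le> - x" by simp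
  then have c: "ws (- x) \<le> u (- x) \<and> u (- x) \<le> pp (- x)" using assms unfolding InvO_def by blast
  then have "0 \<le> u (- x)" "u (- x) \<le> r2"
    using ws_nonneg[OF \<open>0 \<le> - x\<close>] pp_hi[of "-x"] by linarith+
  moreover have "u (- x) = - u x" using assms unfolding InvO_def by simp
  ultimately show ?thesis by simp
qed

lemma InvO_cont: "InvO u \<Longrightarrow> continuous_on UNIV u" unfolding InvO_def by simp

lemma hyp_ws: "hyp kk (kk^2 * r1 + 2 * aa^2 * r1) (\<lambda>x. kk^2 * ws x - ws2 x)"
proof
  show "kk > 0" by (rule kk_pos)
  show "continuous_on UNIV (\<lambda>x. kk^2 * ws x - ws2 x)" by (intro continuous_intros ws_cont ws2_cont)
  fix y
  have "\<bar>kk^2 * ws y - ws2 y\<bar> \<le> kk^2 * \<bar>ws y\<bar> + \<bar>ws2 y\<bar>"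
    using abs_triangle_ineq4[of "kk^2 * ws y" "ws2 y"] by (simp add: abs_mult)
  also have "\<dots> \<le> kk^2 * r1 + 2 * aa^2 * r1"
    by (intro add_mono mult_left_mono ws_bound ws2_bound) auto
  finally show "\<bar>kk^2 * ws y - ws2 y\<bar> \<le> kk^2 * r1 + 2 * aa^2 * r1" .
qed

lemma ws_repr: "Gr kk (\<lambda>x. kk^2 * ws x - ws2 x) x = ws x"
  by (rule Gr_repr[OF kk_pos ws_d1 ws1_d2 ws2_cont ws_bound ws2_bound])

lemma FF_u_odd: "InvO u \<Longrightarrow> FF (- y) (u (- y)) = - FF y (u y)"
  unfolding InvO_def using FF_odd by simp

lemma Gr_odd_out:
  assumes o: "\<And>y. h (- y) = - h y"
  shows "Gr kk h (- x) = - Gr kk h x"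
proof -
  have "(\<lambda>y. h (- y)) = (\<lambda>y. - h y)" using o by auto
  then show ?thesis using Gr_reflect[of kk h x] Gr_neg[of kk h x] by simp
qed

lemma uo_props: "InvO (uo n) \<and> (\<forall>x\<ge>0. uo n x \<le> uo (Suc n) x)"
proof (induction n)
  case 0
  have I: "InvO ws" unfolding InvO_def
    using ws_cont ws_odd ws_le pp_lo by (auto intro: order_trans)
  have "ws x \<le> uo (Suc 0) x" if x: "0 \<le> x" for x
  proof -
    have "Gr kk (\<lambda>x. kk^2 * ws x - ws2 x) x \<le> Gr kk (\<lambda>x. FF x (ws x)) x"
    proof (rule Gr_odd_mono[OF hyp_ws hypF[OF ws_cont InvO_bd[OF I]] _ _ _ x])
      show "kk^2 * ws (- y) - ws2 (- y) = - (kk^2 * ws y - ws2 y)" for y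
        by (simp add: ws_odd ws2_odd)
      show "FF (- y) (ws (- y)) = - FF y (ws y)" for y using FF_u_odd[OF I] .
      show "kk^2 * ws y - ws2 y \<le> FF y (ws y)" if "0 \<le> y" for y
        using ws_sub[OF that] unfolding FF_def kk_sq by simp
    qed
    then show ?thesis using ws_repr by simp
  qed
  then show ?case using I by simp
next
  case (Suc n)
  then have I: "InvO (uo n)" and inc: "\<And>x. 0 \<le> x \<Longrightarrow> uo n x \<le> uo (Suc n) x" by auto
  have Hn: "hyp kk MF (\<lambda>x. FF x (uo n x))" by (rule hypF[OF InvO_cont[OF I] InvO_bd[OF I]])
  have Hp: "hyp kk MF (\<lambda>x. FF x (pp x))"
    by (rule hypF[OF pp_cont]) (use pp_lo pp_hi r1_pos in \<open>smt (verit)\<close>)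
  have on: "\<And>y. FF (- y) (uo n (- y)) = - FF y (uo n y)" using FF_u_odd[OF I] .
  have c2: "continuous_on UNIV (uo (Suc n))" using hyp.Gr_cont[OF Hn] by simp
  have o2: "uo (Suc n) (- x) = - uo (Suc n) x" for x using Gr_odd_out[where h="\<lambda>x. FF x (uo n x)", OF on] by simp
  have up2: "uo (Suc n) x \<le> pp x" if x: "0 \<le> x" for x
  proof -
    have "Gr kk (\<lambda>x. FF x (uo n x)) x \<le> Gr kk (\<lambda>x. FF x (pp x)) x"
    proof (rule Gr_odd_upper[OF Hn Hp on _ _ _ x])
      fix y :: real
      assume y: "0 \<le> y"
      have a: "ws y \<le> uo n y" "uo n y \<le> pp y" using I y unfolding InvO_def by auto
      have "0 \<le> uo n y" using a ws_nonneg[OF y] by simp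
      moreover have "uo n y \<le> r2" using a pp_hi[of y] by simp
      ultimately show "0 \<le> FF y (uo n y)" by (rule FF_nonneg)
      show "FF y (uo n y) \<le> FF y (pp y)"
        using a \<open>0 \<le> uo n y\<close> pp_hi[of y] r2_pos by (intro FF_mono) auto
    next
      fix y show "0 \<le> FF y (pp y)" using pp_lo[of y] pp_hi[of y] r1_pos by (intro FF_nonneg) auto
    qed
    then show ?thesis using pp_fix[of x] by simp
  qed
  have I2: "InvO (uo (Suc n))" unfolding InvO_def
  proof (intro conjI allI impI)
    show "continuous_on UNIV (uo (Suc n))" by (rule c2)
    show "uo (Suc n) (- x) = - uo (Suc n) x" for x by (rule o2)
    show "ws x \<le> uo (Suc n) x" if "0 \<le> x" for x using I that inc[OF that] unfolding InvO_def by force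
    show "uo (Suc n) x \<le> pp x" if "0 \<le> x" for x using up2[OF that] .
  qed
  have "uo (Suc n) x \<le> uo (Suc (Suc n)) x" if x: "0 \<le> x" for x
  proof -
    have on2: "\<And>y. FF (- y) (uo (Suc n) (- y)) = - FF y (uo (Suc n) y)" using FF_u_odd[OF I2] .
    have Hn2: "hyp kk MF (\<lambda>x. FF x (uo (Suc n) x))" by (rule hypF[OF InvO_cont[OF I2] InvO_bd[OF I2]])
    have "Gr kk (\<lambda>x. FF x (uo n x)) x \<le> Gr kk (\<lambda>x. FF x (uo (Suc n) x)) x"
    proof (rule Gr_odd_mono[OF Hn Hn2 on on2 _ x])
      fix y :: real assume y: "0 \<le> y"
      show "FF y (uo n y) \<le> FF y (uo (Suc n) y)"
        using inc[OF y] InvO_bd[OF I, of y] InvO_bd[OF I2, of y] by (intro FF_mono) auto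
    qed
    then show ?thesis by simp
  qed
  then show ?case using I2 by simp
qed

lemma odd_exists:
  "\<exists>\<phi>. continuous_on UNIV \<phi> \<and> (\<forall>x. \<phi> (- x) = - \<phi> x) \<and> (\<forall>x\<ge>0. ws x \<le> \<phi> x \<and> \<phi> x \<le> pp x)
     \<and> (\<forall>x. \<phi> x = Gr kk (\<lambda>x. FF x (\<phi> x)) x) \<and> (\<forall>x. \<bar>\<phi> x\<bar> \<le> r2)"
proof -
  define \<phi> where "\<phi> x = (if 0 \<le> x then (SUP n. uo n x) else - (SUP n. uo n (- x)))" for x
  have limp: "(\<lambda>n. uo n x) \<longlonglongrightarrow> (SUP n. uo n x)" if x: "0 \<le> x" for x
  proof (rule LIMSEQ_incseq_SUP)
    show "bdd_above (range (\<lambda>n. uo n x))"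
      using uo_props x unfolding InvO_def by (auto intro!: bdd_aboveI[of _ "pp x"])
    show "incseq (\<lambda>n. uo n x)" using uo_props x by (intro incseq_SucI) auto
  qed
  have lim: "(\<lambda>n. uo n x) \<longlonglongrightarrow> \<phi> x" for x
  proof (cases "0 \<le> x")
    case True then show ?thesis unfolding \<phi>_def using limp by simp
  next
    case False
    then have "(\<lambda>n. - uo n (- x)) \<longlonglongrightarrow> \<phi> x" unfolding \<phi>_def using limp[of "-x"] by (auto intro: tendsto_minus)
    moreover have "uo n x = - uo n (- x)" for n using uo_props[of n] unfolding InvO_def by (metis minus_minus)
    ultimately show ?thesis by simp
  qed
  have it: "\<And>n. uo (Suc n) = Gr kk (\<lambda>x. FF x (uo n x))" by simp
  have ct: "\<And>n. continuous_on UNIV (uo n)" using uo_props unfolding InvO_def by blast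
  have bd: "\<And>n x. \<bar>uo n x\<bar> \<le> r2" using uo_props InvO_bd by blast
  note F = lim_fix[OF it ct bd lim]
  have odd: "\<phi> (- x) = - \<phi> x" for x
  proof (rule LIMSEQ_unique[OF lim])
    have "uo n (- x) = - uo n x" for n using uo_props[of n] unfolding InvO_def by blast
    then show "(\<lambda>n. uo n (- x)) \<longlonglongrightarrow> - \<phi> x" using lim[of x] by (simp add: tendsto_minus)
  qed
  have lo: "ws x \<le> \<phi> x" if "0 \<le> x" for x
    by (rule LIMSEQ_le_const[OF lim]) (use uo_props that InvO_def in auto)
  have hi: "\<phi> x \<le> pp x" if "0 \<le> x" for x
    by (rule LIMSEQ_le_const2[OF lim]) (use uo_props that InvO_def in auto)
  show ?thesis
  proof (intro exI[of _ \<phi>] conjI allI impI)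
    show "continuous_on UNIV \<phi>" by (rule F(1))
    show "\<phi> x = Gr kk (\<lambda>x. FF x (\<phi> x)) x" for x by (rule F(3))
    show "\<phi> (- x) = - \<phi> x" for x by (rule odd)
    show "ws x \<le> \<phi> x" if "0 \<le> x" for x using lo[OF that] .
    show "\<phi> x \<le> pp x" if "0 \<le> x" for x using hi[OF that] .
    show "\<bar>\<phi> x\<bar> \<le> r2" for x by (rule F(2))
  qed
qed

end


context prob2 begin

lemma gap:
  assumes nondeg: "\<forall>y\<in>{r1..r2}. \<forall>x\<in>{0..L}. 5 * y^4 + 3 * g * y^2 - (om + V x) > 0"
  shows "\<exists>c>0. \<exists>dl>0. \<forall>x u v. r1 - dl \<le> u \<longrightarrow> u \<le> v \<longrightarrow> v \<le> r2 \<longrightarrow> fN x v - fN x u \<le> - c * (v - u)"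
proof -
  define P where "P y = 5 * y^4 + 3 * g * y^2 - lam2" for y
  obtain xs where xs: "xs \<in> {0..L}" "V xs = Vmax" using Vmax_att by blast
  have Ppos: "P y > 0" if y: "y \<in> {r1..r2}" for y
  proof -
    have "5 * y^4 + 3 * g * y^2 - (om + V xs) > 0" using nondeg y xs(1) by blast
    then show ?thesis unfolding P_def lam2_def xs(2) by simp
  qed
  have Pc: "continuous_on {r1..r2} P" unfolding P_def by (intro continuous_intros)
  obtain y0 where y0: "y0 \<in> {r1..r2}" "\<And>y. y \<in> {r1..r2} \<Longrightarrow> P y0 \<le> P y"
    using continuous_attains_inf[OF compact_Icc _ Pc] r12 by auto
  define c0 where "c0 = P y0"
  have c0: "c0 > 0" unfolding c0_def using Ppos y0 by simp
  have "isCont P r1" unfolding P_def by (intro continuous_intros)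
  then have "P \<midarrow>r1\<rightarrow> P r1" by (simp add: isCont_def)
  from LIM_D[OF this, of "c0/2"] c0 obtain s where s: "s > 0"
    "\<And>y. y \<noteq> r1 \<and> norm (y - r1) < s \<longrightarrow> norm (P y - P r1) < c0/2" by auto
  define dl where "dl = s / 2"
  have Pge: "c0 / 2 \<le> P y" if "r1 - dl \<le> y" "y \<le> r2" for y
  proof (cases "r1 \<le> y")
    case True
    then show ?thesis using y0(2)[of y] that c0 unfolding c0_def by auto
  next
    case False
    then have "norm (P y - P r1) < c0/2" using s(2)[of y] that unfolding dl_def by auto
    moreover have "c0 \<le> P r1" using y0(2)[of r1] r12 unfolding c0_def by auto
    ultimately show ?thesis using abs_ge_minus_self[of "P y - P r1"] by simp
  qed
  have fd: "fN x v - fN x u \<le> - (c0/2) * (v - u)" if "r1 - dl \<le> u" "u \<le> v" "v \<le> r2" for x u v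
  proof (cases "u = v")
    case False
    then have uv: "u < v" using that by simp
    have der: "((\<lambda>z. fN x z) has_real_derivative (om + V x) - 3 * g * z^2 - 5 * z^4) (at z)" for z
      unfolding fN_def by (auto intro!: derivative_eq_intros simp: algebra_simps)
    obtain z where z: "u < z" "z < v" "fN x v - fN x u = (v - u) * ((om + V x) - 3 * g * z^2 - 5 * z^4)"
      using MVT2[OF uv der] by blast
    have "(om + V x) - 3 * g * z^2 - 5 * z^4 \<le> - P z" unfolding P_def using Vt_bounds(2)[of x] by simp
    also have "\<dots> \<le> - (c0/2)" using Pge[of z] z that by simp
    finally have "(v - u) * ((om + V x) - 3 * g * z^2 - 5 * z^4) \<le> (v - u) * (- (c0/2))"
      using uv by (intro mult_left_mono) auto
    then show ?thesis using z(3) by (simp add: algebra_simps)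
  qed simp
  show ?thesis using fd c0 s unfolding dl_def by (intro exI[of _ "c0/2"] conjI exI[of _ "s/2"]) auto
qed

lemma ws_lim: "\<exists>X\<ge>0. \<forall>x\<ge>X. r1 - dl \<le> ws x" if "dl > 0" for dl
proof -
  have "eventually (\<lambda>y. tanh y > 1 - dl / r1) at_top"
    using tanh_real_at_top that r1_pos by (intro order_tendstoD(1)) auto
  then obtain Y where Y: "\<And>y. y \<ge> Y \<Longrightarrow> tanh y > 1 - dl / r1" unfolding eventually_at_top_linorder by blast
  define X where "X = max 0 (Y / aa)"
  have "r1 - dl \<le> ws x" if x: "X \<le> x" for x
  proof -
    have "Y / aa \<le> x" using x unfolding X_def by simp
    then have "Y \<le> aa * x" using aa_pos by (simp add: field_simps)
    then have "tanh (aa * x) > 1 - dl / r1" by (rule Y)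
    then have "r1 * tanh (aa * x) > r1 * (1 - dl / r1)" using r1_pos by simp
    then show ?thesis unfolding ws_def using r1_pos by (simp add: algebra_simps)
  qed
  then show ?thesis by (intro exI[of _ X]) (auto simp: X_def)
qed

lemma final:
  assumes nondeg: "\<forall>y\<in>{r1..r2}. \<forall>x\<in>{0..L}. 5 * y^4 + 3 * g * y^2 - (om + V x) > 0"
    and c: "continuous_on UNIV \<phi>" and odd: "\<And>x. \<phi> (- x) = - \<phi> x"
    and lo: "\<And>x. 0 \<le> x \<Longrightarrow> ws x \<le> \<phi> x" and hi: "\<And>x. 0 \<le> x \<Longrightarrow> \<phi> x \<le> pp x"
    and fx: "\<And>x. \<phi> x = Gr kk (\<lambda>x. FF x (\<phi> x)) x" and b: "\<And>x. \<bar>\<phi> x\<bar> \<le> r2"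
  shows "((\<lambda>x. \<phi> x - pp x) \<longlongrightarrow> 0) at_top"
    and "((\<lambda>x. deriv \<phi> x - deriv pp x) \<longlongrightarrow> 0) at_top"
    and "((\<lambda>x. \<phi> x - (- pp x)) \<longlongrightarrow> 0) at_bot"
proof -
  obtain cc dl where cc: "cc > 0" and dl: "dl > 0"
    and fd: "\<And>x u v. r1 - dl \<le> u \<Longrightarrow> u \<le> v \<Longrightarrow> v \<le> r2 \<Longrightarrow> fN x v - fN x u \<le> - cc * (v - u)"
    using gap[OF nondeg] by blast
  obtain X where X: "X \<ge> 0" "\<And>x. x \<ge> X \<Longrightarrow> r1 - dl \<le> ws x" using ws_lim[OF dl] by blast
  have bp: "\<bar>pp x\<bar> \<le> r2" for x using pp_lo[of x] pp_hi[of x] r1_pos by (smt (verit))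
  note Sp = sol[OF pp_cont bp pp_fix]
  note Sf = sol[OF c b fx]
  define d where "d x = pp x - \<phi> x" for x
  define d1 where "d1 x = Gd kk (\<lambda>x. FF x (pp x)) x - Gd kk (\<lambda>x. FF x (\<phi> x)) x" for x
  define d2 where "d2 x = - fN x (pp x) - (- fN x (\<phi> x))" for x
  have dd: "(d has_real_derivative d1 x) (at x)" for x
    unfolding d_def[abs_def] d1_def using Sp(1)[of x] Sf(1)[of x] by (rule DERIV_diff)
  have dd1: "(d1 has_real_derivative d2 x) (at x)" for x
    unfolding d1_def[abs_def] d2_def using Sp(2)[of x] Sf(2)[of x] by (rule DERIV_diff)
  have pos: "0 \<le> d x" if x: "X \<le> x" for x
    using hi[of x] x X(1) unfolding d_def by simp
  have bnd: "d x \<le> r2" if x: "X \<le> x" for x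
  proof -
    have x0: "0 \<le> x" using x X(1) by simp
    show ?thesis unfolding d_def using pp_hi[of x] lo[OF x0] ws_nonneg[OF x0] by simp
  qed
  have conv: "cc * d x \<le> d2 x" if x: "X \<le> x" for x
  proof -
    have x0: "0 \<le> x" using x X(1) by simp
    have "fN x (pp x) - fN x (\<phi> x) \<le> - cc * (pp x - \<phi> x)"
      using fd[of "\<phi> x" "pp x" x] X(2)[OF x] lo[OF x0] hi[OF x0] pp_hi[of x] by simp
    then show "cc * d x \<le> d2 x" unfolding d_def d2_def by (simp add: algebra_simps)
  qed
  note lims = CV[OF dd dd1 pos bnd conv cc]
  show "((\<lambda>x. \<phi> x - pp x) \<longlongrightarrow> 0) at_top"
    using tendsto_minus[OF lims(1)] unfolding d_def by simp
  have "deriv \<phi> x - deriv pp x = - d1 x" for x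
    using DERIV_imp_deriv[OF Sp(1)[of x]] DERIV_imp_deriv[OF Sf(1)[of x]] unfolding d1_def by simp
  then show "((\<lambda>x. deriv \<phi> x - deriv pp x) \<longlongrightarrow> 0) at_top"
    using tendsto_minus[OF lims(2)] by simp
  have "((\<lambda>x. \<phi> (- x) - (- pp (- x))) \<longlongrightarrow> 0) at_top"
  proof -
    have "(\<lambda>x. \<phi> (- x) - (- pp (- x))) = d" unfolding d_def using odd pp_even by auto
    then show ?thesis using lims(1) by simp
  qed
  then show "((\<lambda>x. \<phi> x - (- pp x)) \<longlongrightarrow> 0) at_bot"
    by (simp add: filterlim_at_bot_mirror)
qed

end


theorem mainTheorem6:
  fixes L g1 \<omega> :: real and V :: "real \<Rightarrow> real"
  defines "Vmin \<equiv> Inf (range V)"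
      and "Vmax \<equiv> Sup (range V)"
  defines "\<rho>1 \<equiv> rho g1 (\<omega> + Vmin)"
      and "\<rho>2 \<equiv> rho g1 (\<omega> + Vmax)"
  assumes L_pos: "L > 0"
      and V_cont: "continuous_on UNIV V"
      and V_per: "\<forall>x. V (x + L) = V x"
      and V_even: "\<forall>x. V (- x) = V x"
      and omega: "\<omega> > - Vmin"
      and nondeg: "\<forall>y\<in>{\<rho>1..\<rho>2}. \<forall>x\<in>{0..L}. 5 * y^4 + 3 * g1 * y^2 - (\<omega> + V x) > 0"
  shows "\<exists>\<phi>p \<phi>.
           is_solution (\<lambda>x. \<omega> + V x) g1 \<phi>p \<and>
           (\<forall>x. \<phi>p (x + L) = \<phi>p x) \<and>
           (\<forall>x. 0 < \<phi>p x \<and> \<rho>1 \<le> \<phi>p x \<and> \<phi>p x \<le> \<rho>2) \<and>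
           is_solution (\<lambda>x. \<omega> + V x) g1 \<phi> \<and>
           (\<forall>x. \<phi> (- x) = - \<phi> x) \<and>
           ((\<lambda>x. \<phi> x - \<phi>p x) \<longlongrightarrow> 0) at_top \<and>
           ((\<lambda>x. deriv \<phi> x - deriv \<phi>p x) \<longlongrightarrow> 0) at_top \<and>
           ((\<lambda>x. \<phi> x - (- \<phi>p x)) \<longlongrightarrow> 0) at_bot"
proof -
  interpret P: prob L g1 \<omega> V
    using L_pos V_cont V_per V_even omega unfolding Vmin_def by unfold_locales auto
  have r1eq: "P.r1 = \<rho>1" unfolding P.r1_def P.lam1_def P.Vmin_def \<rho>1_def Vmin_def ..
  have r2eq: "P.r2 = \<rho>2" unfolding P.r2_def P.lam2_def P.Vmax_def \<rho>2_def Vmax_def ..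
  define pp where "pp = (SOME \<phi>p. continuous_on UNIV \<phi>p \<and> (\<forall>x. P.r1 \<le> \<phi>p x \<and> \<phi>p x \<le> P.r2) \<and> (\<forall>x. \<phi>p (x + L) = \<phi>p x)
     \<and> (\<forall>x. \<phi>p (- x) = \<phi>p x) \<and> (\<forall>x. \<phi>p x = Gr P.kk (\<lambda>x. P.FF x (\<phi>p x)) x))"
  have pp0: "continuous_on UNIV pp \<and> (\<forall>x. P.r1 \<le> pp x \<and> pp x \<le> P.r2) \<and> (\<forall>x. pp (x + L) = pp x)
     \<and> (\<forall>x. pp (- x) = pp x) \<and> (\<forall>x. pp x = Gr P.kk (\<lambda>x. P.FF x (pp x)) x)"
    unfolding pp_def by (rule someI_ex[OF P.periodic_exists])
  note pp1 = pp0[THEN conjunct1]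
  note pp2 = pp0[THEN conjunct2, THEN conjunct1, rule_format]
  note pp3 = pp0[THEN conjunct2, THEN conjunct2, THEN conjunct1, rule_format]
  note pp4 = pp0[THEN conjunct2, THEN conjunct2, THEN conjunct2, THEN conjunct1, rule_format]
  note pp5 = pp0[THEN conjunct2, THEN conjunct2, THEN conjunct2, THEN conjunct2, rule_format]
  note pp = pp1 pp2[THEN conjunct1] pp2[THEN conjunct2] pp3 pp4 pp5
  interpret Q: prob2 L g1 \<omega> V pp
    by unfold_locales (rule pp1, rule pp2[THEN conjunct1], rule pp2[THEN conjunct2], rule pp5, rule pp4)
  define \<phi> where "\<phi> = (SOME \<phi>. continuous_on UNIV \<phi> \<and> (\<forall>x. \<phi> (- x) = - \<phi> x) \<and> (\<forall>x\<ge>0. P.ws x \<le> \<phi> x \<and> \<phi> x \<le> pp x)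
     \<and> (\<forall>x. \<phi> x = Gr P.kk (\<lambda>x. P.FF x (\<phi> x)) x) \<and> (\<forall>x. \<bar>\<phi> x\<bar> \<le> P.r2))"
  have ph0: "continuous_on UNIV \<phi> \<and> (\<forall>x. \<phi> (- x) = - \<phi> x) \<and> (\<forall>x\<ge>0. P.ws x \<le> \<phi> x \<and> \<phi> x \<le> pp x)
     \<and> (\<forall>x. \<phi> x = Gr P.kk (\<lambda>x. P.FF x (\<phi> x)) x) \<and> (\<forall>x. \<bar>\<phi> x\<bar> \<le> P.r2)"
    unfolding \<phi>_def by (rule someI_ex[OF Q.odd_exists])
  note ph1 = ph0[THEN conjunct1]
  note ph2 = ph0[THEN conjunct2, THEN conjunct1, rule_format]
  note ph3 = ph0[THEN conjunct2, THEN conjunct2, THEN conjunct1, rule_format]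
  note ph4 = ph0[THEN conjunct2, THEN conjunct2, THEN conjunct2, THEN conjunct1, rule_format]
  note ph5 = ph0[THEN conjunct2, THEN conjunct2, THEN conjunct2, THEN conjunct2, rule_format]
  note ph = ph1 ph2 ph3[THEN conjunct1] ph3[THEN conjunct2] ph4 ph5
  have bp: "\<bar>pp x\<bar> \<le> P.r2" for x using pp(2)[of x] pp(3)[of x] P.r1_pos by (smt (verit))
  have nd: "\<forall>y\<in>{P.r1..P.r2}. \<forall>x\<in>{0..L}. 5 * y^4 + 3 * g1 * y^2 - (\<omega> + V x) > 0"
    using nondeg unfolding r1eq r2eq .
  note F = Q.final[OF nd ph(1) ph(2) ph(3) ph(4) ph(5) ph(6)]
  show ?thesis
  proof (rule exI[of _ pp], rule exI[of _ \<phi>], intro conjI allI)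
    show "is_solution (\<lambda>x. \<omega> + V x) g1 pp" by (rule P.sol(3)[OF pp(1) bp pp(6)])
    show "is_solution (\<lambda>x. \<omega> + V x) g1 \<phi>" by (rule P.sol(3)[OF ph(1) ph(6) ph(5)])
    show "pp (x + L) = pp x" for x by (rule pp(4))
    show "0 < pp x" for x using pp(2)[of x] P.r1_pos by simp
    show "\<rho>1 \<le> pp x" for x using pp(2)[of x] r1eq by simp
    show "pp x \<le> \<rho>2" for x using pp(3)[of x] r2eq by simp
    show "\<phi> (- x) = - \<phi> x" for x by (rule ph(2))
    show "((\<lambda>x. \<phi> x - pp x) \<longlongrightarrow> 0) at_top" by (rule F(1))
    show "((\<lambda>x. deriv \<phi> x - deriv pp x) \<longlongrightarrow> 0) at_top" by (rule F(2))
    show "((\<lambda>x. \<phi> x - (- pp x)) \<longlongrightarrow> 0) at_bot" by (rule F(3))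
  qed
qed


end
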